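(* Let $n>2k$, $k\ge t+3$, and let $\mathcal F\subseteq\binom{[n]}{k}$ be a maximal $t$-intersecting family with $\tau_t(\mathcal F)=t+2$ and $\tau_t(\mathcal T_t(\mathcal F))=t+1$. Suppose there exist $U_0\in\mathcal U_t(\mathcal F)$ and $F_0\in\mathcal F$ with $|U_0\cap F_0|=t-1$ such that $\mathcal T_t(\mathcal F)\not\subseteq\binom{U_0\cup F_0}{t+2}$. Then $$|\mathcal T_t(\mathcal F)|<\max\left\{(k-t)(k-t+1)+1,\ (t+2)(k-t)+1,\ \binom{t+4}{2}\right\}.$$
   Context: A family is $t$-intersecting if any two members meet in at least $t$ elements. A $t$-cover of a family $\mathcal G$ of subsets of $[n]$ is a set $S\subseteq[n]$ with $|S\cap G|\ge t$ for all $G\in\mathcal G$; $\tau_t(\mathcal G)$ is the minimum size of a $t$-cover, and $\mathcal T_t(\mathcal G)$ is the set of all $t$-covers of $\mathcal G$ of size $\tau_t(\mathcal G)$. $\mathcal U_t(\mathcal F)=\mathcal T_t(\mathcal T_t(\mathcal F))$ is the family of all minimum-size $t$-covers of $\mathcal T_t(\mathcal F)$. A $t$-intersecting $\mathcal F\subseteq\binom{[n]}{k}$ is maximal if no $t$-intersecting subfamily of $\binom{[n]}{k}$ properly contains it. *)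

theory Defs
  imports Main
begin

definition k_subsets :: "nat set \<Rightarrow> nat \<Rightarrow> nat set set" where
  "k_subsets X k = {A. A \<subseteq> X \<and> card A = k}"

definition t_intersecting :: "nat \<Rightarrow> nat set set \<Rightarrow> bool" where
  "t_intersecting t F \<longleftrightarrow> (\<forall>A\<in>F. \<forall>B\<in>F. t \<le> card (A \<inter> B))"

definition is_tcover :: "nat \<Rightarrow> nat \<Rightarrow> nat set set \<Rightarrow> nat set \<Rightarrow> bool" where
  "is_tcover n t G S \<longleftrightarrow> S \<subseteq> {1..n} \<and> (\<forall>A\<in>G. t \<le> card (S \<inter> A))"

definition tau :: "nat \<Rightarrow> nat \<Rightarrow> nat set set \<Rightarrow> nat" where
  "tau n t G = (LEAST m. \<exists>S. is_tcover n t G S \<and> card S = m)"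

definition Tcov :: "nat \<Rightarrow> nat \<Rightarrow> nat set set \<Rightarrow> nat set set" where
  "Tcov n t G = {S. is_tcover n t G S \<and> card S = tau n t G}"

definition Ucov :: "nat \<Rightarrow> nat \<Rightarrow> nat set set \<Rightarrow> nat set set" where
  "Ucov n t F = Tcov n t (Tcov n t F)"

definition maximal_t_intersecting :: "nat \<Rightarrow> nat \<Rightarrow> nat \<Rightarrow> nat set set \<Rightarrow> bool" where
  "maximal_t_intersecting n k t F \<longleftrightarrow>
     F \<subseteq> k_subsets {1..n} k \<and> t_intersecting t F \<and>
     (\<forall>G. G \<subseteq> k_subsets {1..n} k \<and> t_intersecting t G \<and> F \<subseteq> G \<longrightarrow> G = F)"

end

theory Submission
  imports Defs
begin

definition st :: "'a set set \<Rightarrow> 'a \<Rightarrow> 'a set set" where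
  "st X v = {e \<in> X. v \<in> e}"

lemma st_sub: "st X v \<subseteq> X" by (auto simp: st_def)

lemma edge2: "card e = 2 \<Longrightarrow> \<exists>x y. x \<noteq> y \<and> e = {x,y}"
  by (auto simp: card_2_iff)

lemma edge_other: assumes "card f = 2" "p \<in> f" obtains q where "q \<noteq> p" "f = {p,q}"
proof -
  have "finite f" using assms(1) by (metis card.infinite zero_neq_numeral)
  then have "card (f - {p}) = 1" using assms by (simp add: card_Diff_singleton)
  then obtain q where q: "f - {p} = {q}" using card_1_singletonE by blast
  then have "q \<noteq> p" "f = {p,q}" using assms(2) by auto
  then show ?thesis using that by blast
qed

lemma two_elems: assumes "2 \<le> card A" obtains x y where "x \<in> A" "y \<in> A" "x \<noteq> y"
proof -
  have "finite A" "A \<noteq> {}" using assms by (auto intro: card_ge_0_finite)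
  then obtain x where x: "x \<in> A" by auto
  have "card (A - {x}) \<ge> 1" using assms x \<open>finite A\<close> by (simp add: card_Diff_singleton)
  then obtain y where "y \<in> A - {x}" by (metis card.empty ex_in_conv not_one_le_zero)
  then show ?thesis using that x by auto
qed

lemma two_edges_share:
  assumes "card e1 = 2" "card e2 = 2" "e1 \<noteq> e2" "c \<in> e1" "c \<in> e2"
  obtains u v where "e1 = {c,u}" "e2 = {c,v}" "u \<noteq> v" "u \<noteq> c" "v \<noteq> c"
proof -
  obtain x y where xy: "x \<noteq> y" "e1 = {x,y}" using edge2[OF assms(1)] by blast
  obtain x' y' where xy': "x' \<noteq> y'" "e2 = {x',y'}" using edge2[OF assms(2)] by blast
  obtain u where u: "e1 = {c,u}" "u \<noteq> c" using xy assms(4) by (metis insert_commute insertE singletonD)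
  obtain v where v: "e2 = {c,v}" "v \<noteq> c" using xy' assms(5) by (metis insert_commute insertE singletonD)
  have "u \<noteq> v" using u v assms(3) by auto
  then show ?thesis using that u v by blast
qed

lemma meet_both:
  assumes "card e = 2" "c \<notin> e" "e \<inter> {c,u} \<noteq> {}" "e \<inter> {c,v} \<noteq> {}" "u \<noteq> v"
  shows "e = {u,v}"
proof -
  have "u \<in> e" "v \<in> e" using assms(2-4) by auto
  then have "{u,v} \<subseteq> e" by auto
  moreover have "card {u,v} = 2" using assms(5) by auto
  ultimately show ?thesis using assms(1) by (metis card_subset_eq card.infinite zero_neq_numeral)
qed

lemma cross_two_share:
  assumes finA: "finite A" and eA: "\<forall>e\<in>A. card e = 2"
    and cr: "\<forall>e\<in>A. e \<inter> {c,u} \<noteq> {} \<and> e \<inter> {c,v} \<noteq> {}" and uv: "u \<noteq> v"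
  shows "A \<subseteq> st A c \<union> {{u,v}}"
  using meet_both[OF _ _ _ _ uv] eA cr by (auto simp: st_def)

lemma card_two_share:
  assumes finA: "finite A" and eA: "\<forall>e\<in>A. card e = 2"
    and cr: "\<forall>e\<in>A. e \<inter> {c,u} \<noteq> {} \<and> e \<inter> {c,v} \<noteq> {}" and uv: "u \<noteq> v"
    and dA: "card (st A c) \<le> D"
  shows "card A \<le> D + 1"
proof -
  have "card A \<le> card (st A c \<union> {{u,v}})"
    using cross_two_share[OF assms(1-4)] finA by (intro card_mono) (auto simp: st_def)
  also have "\<dots> \<le> card (st A c) + card {{u,v}}" by (rule card_Un_le)
  finally show ?thesis using dA by simp
qed

lemma card_disj:
  assumes finA: "finite A" and eA: "\<forall>e\<in>A. card e = 2"
    and f1: "card f1 = 2" and f2: "card f2 = 2" and dj: "f1 \<inter> f2 = {}"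
    and cr: "\<forall>e\<in>A. e \<inter> f1 \<noteq> {} \<and> e \<inter> f2 \<noteq> {}"
  shows "card A \<le> 4"
proof -
  have "A \<subseteq> (\<lambda>(x,y). {x,y}) ` (f1 \<times> f2)"
  proof
    fix e assume e: "e \<in> A"
    obtain x where x: "x \<in> e" "x \<in> f1" using cr e by auto
    obtain y where y: "y \<in> e" "y \<in> f2" using cr e by auto
    have "x \<noteq> y" using x y dj by auto
    then have "card {x,y} = 2" by auto
    moreover have "{x,y} \<subseteq> e" using x y by auto
    ultimately have "e = {x,y}" using eA e by (metis card_subset_eq card.infinite zero_neq_numeral)
    then show "e \<in> (\<lambda>(x,y). {x,y}) ` (f1 \<times> f2)" using x y by force
  qed
  moreover have "finite (f1 \<times> f2)" using f1 f2
    by (metis card.infinite finite_cartesian_product zero_neq_numeral)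
  ultimately have "card A \<le> card (f1 \<times> f2)"
    by (meson card_image_le card_mono dual_order.trans finite_imageI)
  also have "\<dots> = 4" using f1 f2 by (simp add: card_cartesian_product)
  finally show ?thesis .
qed

lemma card_two_edges:
  assumes finA: "finite A" and eA: "\<forall>e\<in>A. card e = 2"
    and f1: "card f1 = 2" and f2: "card f2 = 2" and ne: "f1 \<noteq> f2"
    and cr: "\<forall>e\<in>A. e \<inter> f1 \<noteq> {} \<and> e \<inter> f2 \<noteq> {}"
    and dA: "\<forall>v. card (st A v) \<le> D" and D3: "D \<ge> 3"
  shows "card A \<le> D + 1"
proof (cases "f1 \<inter> f2 = {}")
  case True
  then show ?thesis using card_disj[OF finA eA f1 f2 True cr] D3 by simp
next
  case False
  then obtain c where c: "c \<in> f1" "c \<in> f2" by auto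
  obtain u v where uv: "f1 = {c,u}" "f2 = {c,v}" "u \<noteq> v" "u \<noteq> c" "v \<noteq> c"
    using two_edges_share[OF f1 f2 ne c] by blast
  show ?thesis using card_two_share[OF finA eA _ uv(3) dA[rule_format, of c]] cr uv by auto
qed

lemma single_side:
  assumes finA: "finite A" and eA: "\<forall>e\<in>A. card e = 2"
    and f: "card f = 2" and cr: "\<forall>e\<in>A. e \<inter> f \<noteq> {}"
    and dA: "\<forall>v. card (st A v) \<le> D"
    and ex: "f \<notin> A \<Longrightarrow> \<forall>p\<in>f. card (st A p) < D"
  shows "card A + 1 \<le> 2 * D"
proof -
  obtain p q where pq: "p \<noteq> q" "f = {p,q}" using edge2[OF f] by blast
  have sub: "A \<subseteq> st A p \<union> st A q" using cr pq by (auto simp: st_def)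
  have fin: "finite (st A p)" "finite (st A q)" using finA by (auto simp: st_def)
  have "card A \<le> card (st A p \<union> st A q)" using sub fin by (intro card_mono) auto
  moreover have "card (st A p \<union> st A q) + card (st A p \<inter> st A q) = card (st A p) + card (st A q)"
    using card_Un_Int[OF fin] by simp
  moreover have "card (st A p) \<le> D" "card (st A q) \<le> D" using dA by auto
  moreover have "f \<in> A \<Longrightarrow> card (st A p \<inter> st A q) \<ge> 1"
  proof -
    assume "f \<in> A"
    then have "f \<in> st A p \<inter> st A q" using pq by (auto simp: st_def)
    then show ?thesis using fin by (metis One_nat_def Suc_leI card_gt_0_iff empty_iff finite_Int)
  qed
  moreover have "f \<notin> A \<Longrightarrow> card (st A p) < D \<and> card (st A q) < D" using ex pq by auto
  ultimately show ?thesis by (cases "f \<in> A") linarith+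
qed

lemma inter_side:
  assumes finA: "finite A" and finB: "finite B"
    and eA: "\<forall>e\<in>A. card e = 2" and eB: "\<forall>e\<in>B. card e = 2"
    and cr: "\<forall>e\<in>A. \<forall>f\<in>B. e \<inter> f \<noteq> {}"
    and dA: "\<forall>v. card (st A v) \<le> D" and dB: "\<forall>v. card (st B v) \<le> D"
    and D4: "D \<ge> 4"
    and A2: "card A \<ge> 2" and B2: "card B \<ge> 2"
    and pw: "\<forall>e1\<in>A. \<forall>e2\<in>A. e1 \<inter> e2 \<noteq> {}"
  shows "card A + card B \<le> 2 * D"
proof -
  obtain e1 e2 where e12: "e1 \<in> A" "e2 \<in> A" "e1 \<noteq> e2"
    using A2 by (rule two_elems)
  obtain c where c: "c \<in> e1" "c \<in> e2" using pw e12 by blast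
  obtain u v where uv: "e1 = {c,u}" "e2 = {c,v}" "u \<noteq> v" "u \<noteq> c" "v \<noteq> c"
    using two_edges_share[of e1 e2 c] eA e12 c by blast
  have crB: "\<forall>f\<in>B. f \<inter> {c,u} \<noteq> {} \<and> f \<inter> {c,v} \<noteq> {}"
    using cr e12 uv by (metis inf_commute)
  have Bsub: "B \<subseteq> st B c \<union> {{u,v}}" using cross_two_share[OF finB eB crB uv(3)] .
  have finstB: "finite (st B c)" using finB by (auto simp: st_def)
  have cardB1: "card B \<le> D + 1" using card_two_share[OF finB eB crB uv(3)] dB by auto
  show ?thesis
  proof (cases "\<forall>e\<in>A. c \<in> e")
    case True
    have cA: "card A \<le> D"
    proof -
      have "A = st A c" using True by (auto simp: st_def)
      then show ?thesis using dA by metis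
    qed
    show ?thesis
    proof (cases "{u,v} \<in> B")
      case True
      have "A \<subseteq> {{c,u},{c,v}}"
      proof
        fix e assume e: "e \<in> A"
        have "c \<in> e" using \<open>\<forall>e\<in>A. c \<in> e\<close> e by auto
        moreover have "e \<inter> {u,v} \<noteq> {}" using cr e True by blast
        moreover have "card e = 2" using eA e by auto
        ultimately show "e \<in> {{c,u},{c,v}}"
        proof -
          assume a1: "c \<in> e" and a2: "e \<inter> {u,v} \<noteq> {}" and a3: "card e = 2"
          obtain w where w: "w \<in> e" "w \<in> {u,v}" using a2 by auto
          have "w \<noteq> c" using w uv by auto
          then have "card {c,w} = 2" by auto
          moreover have "{c,w} \<subseteq> e" using a1 w by auto
          ultimately have "e = {c,w}" using a3 by (metis card_subset_eq card.infinite zero_neq_numeral)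
          then show ?thesis using w by auto
        qed
      qed
      then have "card A \<le> card {{c,u},{c,v}}" by (intro card_mono) auto
      also have "\<dots> \<le> 2" by (simp add: card_insert_if)
      finally show ?thesis using cardB1 D4 by linarith
    next
      case False
      then have "B \<subseteq> st B c" using Bsub by auto
      then have "card B \<le> D" using dB finstB by (meson card_mono dual_order.trans)
      then show ?thesis using cA by linarith
    qed
  next
    case False
    then obtain e3 where e3: "e3 \<in> A" "c \<notin> e3" by auto
    have i1: "e3 \<inter> {c,u} \<noteq> {}" using pw e3 e12 uv by auto
    have i2: "e3 \<inter> {c,v} \<noteq> {}" using pw e3 e12 uv by auto
    have e3uv: "e3 = {u,v}"
      using meet_both[OF _ e3(2) i1 i2 uv(3)] eA e3 by auto
    have "B \<subseteq> {{c,u},{c,v},{u,v}}"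
    proof
      fix f assume f: "f \<in> B"
      have m1: "f \<inter> {c,u} \<noteq> {}" "f \<inter> {c,v} \<noteq> {}" "f \<inter> {u,v} \<noteq> {}"
        using cr f e12 e3 uv e3uv by (metis inf_commute)+
      have cf: "card f = 2" using eB f by auto
      show "f \<in> {{c,u},{c,v},{u,v}}"
      proof (cases "c \<in> f")
        case True
        obtain w where w: "w \<in> f" "w \<in> {u,v}" using m1(3) by auto
        have "w \<noteq> c" using w uv by auto
        then have "card {c,w} = 2" by auto
        moreover have "{c,w} \<subseteq> f" using True w by auto
        ultimately have "f = {c,w}" using cf by (metis card_subset_eq card.infinite zero_neq_numeral)
        then show ?thesis using w by auto
      next
        case False
        then show ?thesis using meet_both[OF cf False m1(1,2) uv(3)] by auto
      qed
    qed
    then have "card B \<le> card {{c,u},{c,v},{u,v}}" by (intro card_mono) auto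
    also have "\<dots> \<le> 3" by (simp add: card_insert_if)
    finally have cB3: "card B \<le> 3" .
    obtain f1 f2 where f12: "f1 \<in> B" "f2 \<in> B" "f1 \<noteq> f2"
      using B2 by (rule two_elems)
    have "card A \<le> D + 1"
      using card_two_edges[OF finA eA _ _ f12(3) _ dA] eB f12 cr D4 by auto
    then show ?thesis using cB3 D4 by linarith
  qed
qed

lemma graph_bound:
  assumes finA: "finite A" and finB: "finite B" and neA: "A \<noteq> {}" and neB: "B \<noteq> {}"
    and eA: "\<forall>e\<in>A. card e = 2" and eB: "\<forall>e\<in>B. card e = 2"
    and cr: "\<forall>e\<in>A. \<forall>f\<in>B. e \<inter> f \<noteq> {}"
    and dA: "\<forall>v. card (st A v) \<le> D" and dB: "\<forall>v. card (st B v) \<le> D"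
    and exA: "\<forall>f\<in>B - A. \<forall>p\<in>f. card (st A p) < D"
    and exB: "\<forall>e\<in>A - B. \<forall>p\<in>e. card (st B p) < D"
    and D4: "D \<ge> 4"
  shows "card A + card B \<le> 2 * D"
proof -
  have crs: "\<forall>f\<in>B. \<forall>e\<in>A. f \<inter> e \<noteq> {}" using cr by (metis inf_commute)
  show ?thesis
  proof (cases "card B = 1")
    case True
    then obtain f where f: "B = {f}" using card_1_singletonE by blast
    have "card A + 1 \<le> 2 * D"
      using single_side[OF finA eA _ _ dA] eB f cr exA by auto
    then show ?thesis using True by simp
  next
    case nB1: False
    show ?thesis
    proof (cases "card A = 1")
      case True
      then obtain e where e: "A = {e}" using card_1_singletonE by blast
      have "card B + 1 \<le> 2 * D"
        using single_side[OF finB eB _ _ dB] eA e crs exB by auto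
      then show ?thesis using True by simp
    next
      case nA1: False
      have A2: "card A \<ge> 2" using nA1 neA finA by (metis One_nat_def Suc_1 card_0_eq less_2_cases not_less)
      have B2: "card B \<ge> 2" using nB1 neB finB by (metis One_nat_def Suc_1 card_0_eq less_2_cases not_less)
      show ?thesis
      proof (cases "\<forall>e1\<in>A. \<forall>e2\<in>A. e1 \<inter> e2 \<noteq> {}")
        case True
        then show ?thesis using inter_side[OF finA finB eA eB cr dA dB D4 A2 B2] by blast
      next
        case npA: False
        show ?thesis
        proof (cases "\<forall>e1\<in>B. \<forall>e2\<in>B. e1 \<inter> e2 \<noteq> {}")
          case True
          then show ?thesis using inter_side[OF finB finA eB eA crs dB dA D4 B2 A2] by linarith
        next
          case False
          then obtain f1 f2 where f: "f1 \<in> B" "f2 \<in> B" "f1 \<inter> f2 = {}" by blast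
          obtain e1 e2 where e: "e1 \<in> A" "e2 \<in> A" "e1 \<inter> e2 = {}" using npA by blast
          have "card A \<le> 4" using card_disj[OF finA eA _ _ f(3)] eB f cr by auto
          moreover have "card B \<le> 4" using card_disj[OF finB eB _ _ e(3)] eA e crs by auto
          ultimately show ?thesis using D4 by linarith
        qed
      qed
    qed
  qed
qed



lemma arith_final:
  fixes m t X :: nat
  assumes m3: "m \<ge> 3" and t1: "t \<ge> 1"
    and h: "X \<le> 3*m + t + 2 \<or> (t \<ge> 2 \<and> (X \<le> 2*m + 2*t + 3 \<or> X \<le> 3*m + 3 \<or> X + t \<le> (t+2)*m + 3))"
  shows "X < max (m*(m+1)+1) (max ((t+2)*m+1) ((t+4) choose 2))"
proof -
  have mm: "m*m \<ge> 3*m" using m3 by simp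
  have e1: "m*(m+1)+1 = m*m + m + 1" by (simp add: algebra_simps)
  have e2: "(t+2)*m+1 = t*m + 2*m + 1" by (simp add: algebra_simps)
  show ?thesis
  proof (cases "t = 1")
    case True
    then have "X \<le> 3*m+3" using h by auto
    then have "X < m*(m+1)+1" using mm e1 m3 by linarith
    then show ?thesis by simp
  next
    case t1': False
    show ?thesis
    proof (cases "t = 2")
      case True
      show ?thesis
      proof (cases "m = 3")
        case True
        have "(6::nat) choose 2 = 15" by (simp add: choose_two)
        then have "X < (t+4) choose 2" using h \<open>t = 2\<close> True by auto
        then show ?thesis by simp
      next
        case False
        then have "m \<ge> 4" using m3 by simp
        then have "m*m \<ge> 4*m" by simp
        moreover have "X \<le> 3*m+4 \<or> X \<le> 2*m+7 \<or> X \<le> 3*m+3 \<or> X \<le> 4*m+1"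
          using h \<open>t = 2\<close> by auto
        ultimately have "X < m*(m+1)+1" using e1 \<open>m \<ge> 4\<close> by linarith
        then show ?thesis by simp
      qed
    next
      case False
      then have t3: "t \<ge> 3" using t1 t1' by simp
      have tm: "t*m \<ge> 3*t" "t*m \<ge> 3*m" using t3 m3 by (simp_all add: mult_le_mono)
      have "X < (t+2)*m+1" using h e2 tm t3 by linarith
      then show ?thesis by simp
    qed
  qed
qed


locale L =
  fixes n k t :: nat and F TT :: "nat set set" and U0 F0 T1 :: "nat set" and y1 :: nat
  assumes kt: "k \<ge> t + 3"
    and F_card: "\<And>G. G \<in> F \<Longrightarrow> finite G \<and> card G = k"
    and TT_card: "\<And>T. T \<in> TT \<Longrightarrow> finite T \<and> card T = t + 2 \<and> T \<subseteq> {1..n}"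
    and TT_cov: "\<And>T G. T \<in> TT \<Longrightarrow> G \<in> F \<Longrightarrow> t \<le> card (G \<inter> T)"
    and TT_int: "\<And>T T'. T \<in> TT \<Longrightarrow> T' \<in> TT \<Longrightarrow> t \<le> card (T \<inter> T')"
    and wit: "\<And>Y. Y \<subseteq> {1..n} \<Longrightarrow> card Y = t + 1 \<Longrightarrow> \<exists>G\<in>F. card (G \<inter> Y) < t"
    and witT: "\<And>X. X \<subseteq> {1..n} \<Longrightarrow> card X = t \<Longrightarrow> \<exists>T\<in>TT. card (X \<inter> T) < t"
    and U0n: "U0 \<subseteq> {1..n}" and U0c: "card U0 = t + 1"
    and U0cov: "\<And>T. T \<in> TT \<Longrightarrow> t \<le> card (U0 \<inter> T)"
    and F0F: "F0 \<in> F" and UF0: "card (U0 \<inter> F0) + 1 = t"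
    and T1T: "T1 \<in> TT" and y1T: "y1 \<in> T1" and y1U: "y1 \<notin> U0" and y1F: "y1 \<notin> F0"
    and finTT: "finite TT"
begin

lemma finU0: "finite U0" using U0n finite_subset by blast
lemma finF0: "finite F0" using F_card F0F by blast
lemma cardF0: "card F0 = k" using F_card F0F by blast
lemma t1: "t \<ge> 1" using UF0 by linarith
lemma cardW: "card (U0 \<inter> F0) = t - 1" using UF0 by linarith

lemma cardUF: "card (U0 - F0) = 2"
proof -
  have "card (U0 - F0) = card U0 - card (U0 \<inter> F0)"
    using finU0 by (simp add: card_Diff_subset_Int)
  then show ?thesis using U0c cardW t1 by simp
qed

lemma cardFU: "card (F0 - U0) = k - t + 1"
proof -
  have "card (F0 - U0) = card F0 - card (F0 \<inter> U0)"
    using finF0 by (simp add: card_Diff_subset_Int)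
  then show ?thesis using cardF0 cardW t1 kt by (simp add: Int_commute)
qed

lemma T1_struct:
  "U0 \<inter> F0 \<subseteq> T1 \<and> card (T1 \<inter> (U0 - F0)) = 1 \<and> card (T1 \<inter> (F0 - U0)) = 1 \<and>
   T1 = (U0 \<inter> F0) \<union> (T1 \<inter> (U0 - F0)) \<union> (T1 \<inter> (F0 - U0)) \<union> {y1}"
proof -
  define R where "R = T1 \<inter> (U0 \<inter> F0)"
  define P where "P = T1 \<inter> (U0 - F0)"
  define Q where "Q = T1 \<inter> (F0 - U0)"
  have fT1: "finite T1" and cT1: "card T1 = t + 2" using TT_card T1T by auto
  have fin: "finite R" "finite P" "finite Q" using fT1 by (auto simp: R_def P_def Q_def)
  have u: "U0 \<inter> T1 = R \<union> P" by (auto simp: R_def P_def)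
  have f: "F0 \<inter> T1 = R \<union> Q" by (auto simp: R_def Q_def)
  have c1: "card (U0 \<inter> T1) = card R + card P"
    unfolding u by (rule card_Un_disjoint) (use fin in \<open>auto simp: R_def P_def\<close>)
  have c2: "card (F0 \<inter> T1) = card R + card Q"
    unfolding f by (rule card_Un_disjoint) (use fin in \<open>auto simp: R_def Q_def\<close>)
  have h1: "t \<le> card R + card P" using U0cov[OF T1T] c1 by simp
  have h2: "t \<le> card R + card Q" using TT_cov[OF T1T F0F] c2 by simp
  have sub: "R \<union> P \<union> Q \<union> {y1} \<subseteq> T1" using y1T by (auto simp: R_def P_def Q_def)
  have c3: "card (R \<union> P \<union> Q \<union> {y1}) = card R + card P + card Q + 1"
  proof -
    have "card (R \<union> P \<union> Q \<union> {y1}) = card (R \<union> P \<union> Q) + card {y1}"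
      by (rule card_Un_disjoint) (use fin y1U y1F in \<open>auto simp: R_def P_def Q_def\<close>)
    moreover have "card (R \<union> P \<union> Q) = card (R \<union> P) + card Q"
      by (rule card_Un_disjoint) (use fin in \<open>auto simp: R_def P_def Q_def\<close>)
    moreover have "card (R \<union> P) = card R + card P"
      by (rule card_Un_disjoint) (use fin in \<open>auto simp: R_def P_def Q_def\<close>)
    ultimately show ?thesis by simp
  qed
  have h3: "card R + card P + card Q + 1 \<le> t + 2"
    using card_mono[OF fT1 sub] c3 cT1 by simp
  have RW0: "R \<subseteq> U0 \<inter> F0" unfolding R_def by blast
  have h4: "card R \<le> t - 1" using card_mono[OF _ RW0] finU0 cardW by simp
  have cR: "card R = t - 1" and cP: "card P = 1" and cQ: "card Q = 1" using h1 h2 h3 h4 t1 by linarith+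
  have RW: "R = U0 \<inter> F0"
    using card_subset_eq[OF _ RW0] finU0 cR cardW by simp
  have eq: "R \<union> P \<union> Q \<union> {y1} = T1"
    using card_subset_eq[OF fT1 sub] c3 cR cP cQ cT1 t1 by simp
  show ?thesis using RW cP cQ eq by (auto simp: P_def Q_def R_def)
qed

lemma exists_abx:
  "\<exists>a b x1. a \<in> U0 \<and> b \<in> U0 \<and> a \<noteq> b \<and> a \<notin> F0 \<and> b \<notin> F0 \<and> x1 \<in> F0 \<and> x1 \<notin> U0 \<and>
     U0 - F0 = {a,b} \<and> T1 = insert a (insert x1 (insert y1 (U0 \<inter> F0)))"
proof -
  have S: "U0 \<inter> F0 \<subseteq> T1" "card (T1 \<inter> (U0 - F0)) = 1" "card (T1 \<inter> (F0 - U0)) = 1"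
    "T1 = (U0 \<inter> F0) \<union> (T1 \<inter> (U0 - F0)) \<union> (T1 \<inter> (F0 - U0)) \<union> {y1}"
    using T1_struct by auto
  obtain a where a: "T1 \<inter> (U0 - F0) = {a}" using card_1_singletonE[OF S(2)] .
  obtain x1 where x: "T1 \<inter> (F0 - U0) = {x1}" using card_1_singletonE[OF S(3)] .
  obtain p q where pq: "p \<noteq> q" "U0 - F0 = {p,q}" using cardUF by (auto simp: card_2_iff)
  have aU: "a \<in> U0 - F0" using a by auto
  obtain b where b: "U0 - F0 = {a,b}" "a \<noteq> b"
  proof (cases "a = p")
    case True then show ?thesis using that pq by blast
  next
    case False then have "a = q" using aU pq by blast
    then show ?thesis using that pq by (metis insert_commute)
  qed
  have T: "T1 = insert a (insert x1 (insert y1 (U0 \<inter> F0)))"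
    using S(4) a x by auto
  have xx: "x1 \<in> F0" "x1 \<notin> U0" using x by auto
  have bb: "b \<in> U0" "b \<notin> F0" using b(1) by auto
  show ?thesis using aU bb b xx T by blast
qed

end

locale L2 = L +
  fixes a b x1 :: nat
  assumes aU: "a \<in> U0" and bU: "b \<in> U0" and ab: "a \<noteq> b" and aF: "a \<notin> F0" and bF: "b \<notin> F0"
    and x1F: "x1 \<in> F0" and x1U: "x1 \<notin> U0" and UFab: "U0 - F0 = {a,b}"
    and T1eq: "T1 = insert a (insert x1 (insert y1 (U0 \<inter> F0)))"
begin

lemma Ueq: "U0 = insert a (insert b (U0 \<inter> F0))" using UFab aU bU by auto
lemma Ub: "U0 - {b} = insert a (U0 \<inter> F0)" using UFab aU bU ab aF by auto
lemma Ua: "U0 - {a} = insert b (U0 \<inter> F0)" using UFab aU bU ab bF by auto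

lemma cardU1: "u \<in> U0 \<Longrightarrow> card (U0 - {u}) = t" using U0c finU0 by (simp add: card_Diff_singleton)
lemma cardU2: "u \<in> U0 \<Longrightarrow> v \<in> U0 \<Longrightarrow> u \<noteq> v \<Longrightarrow> card (U0 - {u,v}) = t - 1"
proof -
  assume "u \<in> U0" "v \<in> U0" "u \<noteq> v"
  then have "card (U0 - {u,v}) = card U0 - card {u,v}" by (intro card_Diff_subset) auto
  then show ?thesis using U0c \<open>u \<noteq> v\<close> by simp
qed
lemma cardW1: "w \<in> U0 \<inter> F0 \<Longrightarrow> card (U0 \<inter> F0 - {w}) = t - 2"
  using cardW finU0 by (simp add: card_Diff_singleton)

lemma cov_contra: "T \<in> TT \<Longrightarrow> G \<in> F \<Longrightarrow> G \<inter> T \<subseteq> S \<Longrightarrow> finite S \<Longrightarrow> card S < t \<Longrightarrow> False"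
  using TT_cov card_mono by (metis leD le_trans)
lemma int_contra: "T \<in> TT \<Longrightarrow> T' \<in> TT \<Longrightarrow> T \<inter> T' \<subseteq> S \<Longrightarrow> finite S \<Longrightarrow> card S < t \<Longrightarrow> False"
  using TT_int card_mono by (metis leD le_trans)

definition "G0 = {T \<in> TT. U0 \<subseteq> T}"
definition "Gm u = {T \<in> TT. U0 \<inter> T = U0 - {u}}"

lemma decomp: "T \<in> TT \<Longrightarrow> U0 \<subseteq> T \<or> (\<exists>u\<in>U0. U0 \<inter> T = U0 - {u})"
proof -
  assume T: "T \<in> TT"
  show ?thesis
  proof (cases "U0 \<subseteq> T")
    case False
    then obtain u where u: "u \<in> U0" "u \<notin> T" by auto
    have sub: "U0 \<inter> T \<subseteq> U0 - {u}" using u by auto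
    have "card (U0 - {u}) \<le> card (U0 \<inter> T)" using cardU1[OF u(1)] U0cov[OF T] by simp
    then have "U0 \<inter> T = U0 - {u}" using card_seteq[of "U0 - {u}" "U0 \<inter> T"] sub finU0 by blast
    then show ?thesis using u by auto
  qed simp
qed

lemma TT_sub: "TT \<subseteq> G0 \<union> (\<Union>w\<in>U0 \<inter> F0. Gm w) \<union> Gm b \<union> Gm a"
proof
  fix T assume T: "T \<in> TT"
  show "T \<in> G0 \<union> (\<Union>w\<in>U0 \<inter> F0. Gm w) \<union> Gm b \<union> Gm a"
  proof (cases "U0 \<subseteq> T")
    case True then show ?thesis using T by (auto simp: G0_def)
  next
    case False
    then obtain u where u: "u \<in> U0" "U0 \<inter> T = U0 - {u}" using decomp[OF T] by auto
    then have "u \<in> U0 \<inter> F0 \<or> u = a \<or> u = b" using UFab by auto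
    then show ?thesis using u T by (auto simp: Gm_def)
  qed
qed

lemma finG: "finite G0" "finite (Gm u)" using finTT by (auto simp: G0_def Gm_def)

lemma card_TT: "card TT \<le> card G0 + (\<Sum>w\<in>U0 \<inter> F0. card (Gm w)) + card (Gm b) + card (Gm a)"
proof -
  have "card TT \<le> card (G0 \<union> (\<Union>w\<in>U0 \<inter> F0. Gm w) \<union> Gm b \<union> Gm a)"
    using TT_sub by (intro card_mono) (auto simp: finG finU0)
  also have "\<dots> \<le> card (G0 \<union> (\<Union>w\<in>U0 \<inter> F0. Gm w) \<union> Gm b) + card (Gm a)" by (rule card_Un_le)
  also have "\<dots> \<le> card (G0 \<union> (\<Union>w\<in>U0 \<inter> F0. Gm w)) + card (Gm b) + card (Gm a)"
    using card_Un_le by (metis add_le_mono1)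
  also have "\<dots> \<le> card G0 + card (\<Union>w\<in>U0 \<inter> F0. Gm w) + card (Gm b) + card (Gm a)"
    using card_Un_le by (metis add_le_mono1)
  also have "\<dots> \<le> card G0 + (\<Sum>w\<in>U0 \<inter> F0. card (Gm w)) + card (Gm b) + card (Gm a)"
    using card_UN_le[of "U0 \<inter> F0" Gm] finU0 by simp
  finally show ?thesis .
qed

lemma G0_form: "T \<in> G0 \<Longrightarrow> \<exists>z. z \<in> F0 \<and> z \<notin> U0 \<and> T = insert z U0"
proof -
  assume T0: "T \<in> G0"
  then have T: "T \<in> TT" "U0 \<subseteq> T" by (auto simp: G0_def)
  have fT: "finite T" "card T = t + 2" using TT_card T(1) by auto
  have "card (T - U0) = card T - card U0" using T(2) fT finU0 by (simp add: card_Diff_subset)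
  then have "card (T - U0) = 1" using fT U0c by simp
  then obtain z where z: "T - U0 = {z}" using card_1_singletonE by blast
  have Tz: "T = insert z U0" using z T(2) by auto
  have zU: "z \<notin> U0" using z by auto
  have "z \<in> F0"
  proof (rule ccontr)
    assume "z \<notin> F0"
    then have "F0 \<inter> T \<subseteq> U0 \<inter> F0" using Tz by auto
    then show False using cov_contra[OF T(1) F0F, of "U0 \<inter> F0"] cardW t1 finU0 by auto
  qed
  then show ?thesis using Tz zU by auto
qed

lemma card_G0: "card G0 \<le> k - t + 1"
proof -
  have "G0 \<subseteq> (\<lambda>z. insert z U0) ` (F0 - U0)" using G0_form by blast
  then have "card G0 \<le> card ((\<lambda>z. insert z U0) ` (F0 - U0))"
    by (intro card_mono) (auto simp: finF0)
  also have "\<dots> \<le> card (F0 - U0)" by (rule card_image_le) (simp add: finF0)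
  finally have "card G0 \<le> card (F0 - U0)" .
  then show ?thesis using cardFU by simp
qed

lemma edge_form: "u \<in> U0 \<Longrightarrow> T \<in> Gm u \<Longrightarrow>
   \<exists>p q. p \<noteq> q \<and> p \<notin> U0 \<and> q \<notin> U0 \<and> T = insert p (insert q (U0 - {u})) \<and> T - U0 = {p,q}"
proof -
  assume u: "u \<in> U0" and T0: "T \<in> Gm u"
  then have T: "T \<in> TT" "U0 \<inter> T = U0 - {u}" by (auto simp: Gm_def)
  have fT: "finite T" "card T = t + 2" using TT_card T(1) by auto
  have "card (T - U0) = card T - card (T \<inter> U0)" using fT by (simp add: card_Diff_subset_Int)
  then have "card (T - U0) = 2" using fT cardU1[OF u] T(2) by (simp add: Int_commute)
  then obtain p q where pq: "p \<noteq> q" "T - U0 = {p,q}" by (auto simp: card_2_iff)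
  have "T = (T - U0) \<union> (U0 \<inter> T)" by blast
  also have "\<dots> = insert p (insert q (U0 - {u}))" using pq T(2) by simp
  finally have "T = insert p (insert q (U0 - {u}))" .
  then show ?thesis using pq by auto
qed


lemma t2_of_W: "w \<in> U0 \<inter> F0 \<Longrightarrow> t \<ge> 2"
proof -
  assume "w \<in> U0 \<inter> F0"
  then have "card (U0 \<inter> F0) \<ge> 1" using finU0 by (metis One_nat_def Suc_leI card_gt_0_iff empty_iff finite_Int)
  then show ?thesis using cardW by linarith
qed

lemma Gm_TT: "T \<in> Gm u \<Longrightarrow> T \<in> TT" by (simp add: Gm_def)

lemma Gw_form: "w \<in> U0 \<inter> F0 \<Longrightarrow> T \<in> Gm w \<Longrightarrow>
   \<exists>z. z \<in> F0 \<and> z \<notin> U0 \<and> z \<noteq> x1 \<and> T = insert x1 (insert z (U0 - {w}))"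
proof -
  assume w: "w \<in> U0 \<inter> F0" and T0: "T \<in> Gm w"
  have T: "T \<in> TT" using T0 by (simp add: Gm_def)
  have t2: "t \<ge> 2" using t2_of_W[OF w] .
  obtain p q where pq: "p \<noteq> q" "p \<notin> U0" "q \<notin> U0" "T = insert p (insert q (U0 - {w}))"
    using edge_form[OF _ T0] w by blast
  have cW1: "card (U0 \<inter> F0 - {w}) = t - 2" using cardW1[OF w] .
  have fW1: "finite (U0 \<inter> F0 - {w})" using finU0 by simp
  have pF: "p \<in> F0"
  proof (rule ccontr)
    assume "p \<notin> F0"
    then have "F0 \<inter> T \<subseteq> insert q (U0 \<inter> F0 - {w})" using pq by auto
    moreover have "card (insert q (U0 \<inter> F0 - {w})) < t" using cW1 fW1 t2 card_insert_le
      by (metis Suc_diff_Suc Suc_le_lessD card_insert_if diff_less le_less_trans less_2_cases_iff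
          less_numeral_extra(1) linorder_not_le nat_less_le numeral_2_eq_2)
    ultimately show False using cov_contra[OF T F0F] fW1 by blast
  qed
  have qF: "q \<in> F0"
  proof (rule ccontr)
    assume "q \<notin> F0"
    then have "F0 \<inter> T \<subseteq> insert p (U0 \<inter> F0 - {w})" using pq by auto
    moreover have "card (insert p (U0 \<inter> F0 - {w})) < t" using cW1 fW1 t2 card_insert_le
      by (metis Suc_diff_Suc Suc_le_lessD card_insert_if diff_less le_less_trans less_2_cases_iff
          less_numeral_extra(1) linorder_not_le nat_less_le numeral_2_eq_2)
    ultimately show False using cov_contra[OF T F0F] fW1 by blast
  qed
  have x1pq: "x1 = p \<or> x1 = q"
  proof (rule ccontr)
    assume nx: "\<not> (x1 = p \<or> x1 = q)"
    have "T \<inter> T1 \<subseteq> insert a (U0 \<inter> F0 - {w})" using pq nx T1eq pF qF y1F x1U y1U by auto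
    moreover have "card (insert a (U0 \<inter> F0 - {w})) < t" using cW1 fW1 t2 card_insert_le
      by (metis Suc_diff_Suc Suc_le_lessD card_insert_if diff_less le_less_trans less_2_cases_iff
          less_numeral_extra(1) linorder_not_le nat_less_le numeral_2_eq_2)
    ultimately show False using int_contra[OF T T1T] fW1 by blast
  qed
  show ?thesis
  proof (cases "x1 = p")
    case True then show ?thesis using pq qF by (intro exI[of _ q]) auto
  next
    case False then have "x1 = q" using x1pq by simp
    then show ?thesis using pq pF by (intro exI[of _ p]) (auto simp: insert_commute)
  qed
qed

definition "ZW = {z. z \<in> F0 \<and> z \<notin> U0 \<and> z \<noteq> x1 \<and> (\<exists>w\<in>U0 \<inter> F0. insert x1 (insert z (U0 - {w})) \<in> TT)}"

lemma finZW: "finite ZW" using finF0 by (rule finite_subset[rotated]) (auto simp: ZW_def)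

lemma Gw_sub: "w \<in> U0 \<inter> F0 \<Longrightarrow> Gm w \<subseteq> (\<lambda>z. insert x1 (insert z (U0 - {w}))) ` ZW"
proof
  fix T assume w: "w \<in> U0 \<inter> F0" and T: "T \<in> Gm w"
  obtain z where z: "z \<in> F0" "z \<notin> U0" "z \<noteq> x1" "T = insert x1 (insert z (U0 - {w}))"
    using Gw_form[OF w T] by blast
  have "z \<in> ZW" using z w T by (auto simp: ZW_def Gm_def)
  then show "T \<in> (\<lambda>z. insert x1 (insert z (U0 - {w}))) ` ZW" using z by blast
qed

lemma card_Gw_ZW: "w \<in> U0 \<inter> F0 \<Longrightarrow> card (Gm w) \<le> card ZW"
  by (meson Gw_sub card_image_le card_mono finZW finite_imageI order_trans)

lemma card_Gw: "w \<in> U0 \<inter> F0 \<Longrightarrow> card (Gm w) \<le> k - t"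
proof -
  assume w: "w \<in> U0 \<inter> F0"
  have "ZW \<subseteq> F0 - U0 - {x1}" by (auto simp: ZW_def)
  then have "card ZW \<le> card (F0 - U0 - {x1})" using finF0 by (intro card_mono) auto
  also have "\<dots> = k - t" using cardFU x1F x1U finF0 t1 kt by (simp add: card_Diff_singleton)
  finally show ?thesis using card_Gw_ZW[OF w] by linarith
qed

lemma Gm_recon: "T \<in> Gm u \<Longrightarrow> T = (U0 - {u}) \<union> (T - U0)"
  by (auto simp: Gm_def)

lemma cross_gen:
  assumes u: "u \<in> U0" and u': "u' \<in> U0" and uu: "u \<noteq> u'"
    and T: "(U0 - {u}) \<union> e \<in> TT" and T': "(U0 - {u'}) \<union> f \<in> TT"
    and e: "e \<inter> U0 = {}" and f: "f \<inter> U0 = {}"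
  shows "e \<inter> f \<noteq> {}"
proof
  assume ef: "e \<inter> f = {}"
  have sub: "((U0 - {u}) \<union> e) \<inter> ((U0 - {u'}) \<union> f) \<subseteq> U0 - {u,u'}" using ef e f by auto
  have "card (U0 - {u,u'}) < t" using cardU2[OF u u' uu] t1 by simp
  then show False using int_contra[OF T T' sub] finU0 by simp
qed

definition "EA = (\<lambda>T. T - U0) ` Gm b"
definition "EB = (\<lambda>T. T - U0) ` Gm a"

lemma inj_Gm: "inj_on (\<lambda>T. T - U0) (Gm u)"
  by (rule inj_onI) (metis Gm_recon)

lemma card_EA: "card EA = card (Gm b)" unfolding EA_def by (rule card_image[OF inj_Gm])
lemma card_EB: "card EB = card (Gm a)" unfolding EB_def by (rule card_image[OF inj_Gm])
lemma fin_E: "finite EA" "finite EB" using finG by (auto simp: EA_def EB_def)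

lemma edge_card: "u \<in> U0 \<Longrightarrow> T \<in> Gm u \<Longrightarrow> card (T - U0) = 2"
  using edge_form by fastforce

lemma E_gen: "u \<in> U0 \<Longrightarrow> e \<in> (\<lambda>T. T - U0) ` Gm u \<Longrightarrow> card e = 2 \<and> e \<inter> U0 = {} \<and> (U0 - {u}) \<union> e \<in> TT"
proof -
  assume u: "u \<in> U0" and e: "e \<in> (\<lambda>T. T - U0) ` Gm u"
  then obtain T where T: "T \<in> Gm u" "e = T - U0" by blast
  have "card e = 2" using edge_card[OF u T(1)] T(2) by simp
  moreover have "e \<inter> U0 = {}" using T(2) by blast
  moreover have "(U0 - {u}) \<union> e = T" using Gm_recon[OF T(1)] T(2) by simp
  ultimately show ?thesis using Gm_TT[OF T(1)] by simp
qed

lemma E_props: "e \<in> EA \<Longrightarrow> card e = 2 \<and> e \<inter> U0 = {} \<and> (U0 - {b}) \<union> e \<in> TT"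
  "e \<in> EB \<Longrightarrow> card e = 2 \<and> e \<inter> U0 = {} \<and> (U0 - {a}) \<union> e \<in> TT"
  unfolding EA_def EB_def using E_gen aU bU by auto

lemma in_EA: "e \<inter> U0 = {} \<Longrightarrow> (U0 - {b}) \<union> e \<in> TT \<Longrightarrow> e \<in> EA"
proof -
  assume e: "e \<inter> U0 = {}" and T: "(U0 - {b}) \<union> e \<in> TT"
  have "(U0 - {b}) \<union> e \<in> Gm b" using e T by (auto simp: Gm_def)
  moreover have "((U0 - {b}) \<union> e) - U0 = e" using e by auto
  ultimately show ?thesis unfolding EA_def by (metis image_eqI)
qed

lemma cross_AB: "e \<in> EA \<Longrightarrow> f \<in> EB \<Longrightarrow> e \<inter> f \<noteq> {}"
  using cross_gen[OF bU aU ab[symmetric]] E_props by blast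

lemma deg_core:
  assumes u: "u \<in> U0" and v: "v \<notin> U0" and ne: "{T \<in> Gm u. v \<in> T} \<noteq> {}"
  shows "\<exists>G\<in>F. card (G \<inter> insert v (U0 - {u})) < t \<and> t - 1 \<le> card (G \<inter> insert v (U0 - {u})) \<and>
     (\<forall>T\<in>{T \<in> Gm u. v \<in> T}. \<exists>z. z \<in> G - insert v (U0 - {u}) \<and> z \<noteq> u \<and> T = insert z (insert v (U0 - {u})))"
proof -
  define Y where "Y = insert v (U0 - {u})"
  obtain T0 where T0: "T0 \<in> Gm u" "v \<in> T0" using ne by auto
  have Yn: "Y \<subseteq> {1..n}" using T0 TT_card[OF Gm_TT[OF T0(1)]] U0n by (auto simp: Y_def)
  have finY: "finite Y" using finU0 by (simp add: Y_def)
  have cY: "card Y = t + 1" using cardU1[OF u] v finU0 by (simp add: Y_def)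
  obtain G where G: "G \<in> F" "card (G \<inter> Y) < t" using wit[OF Yn cY] by blast
  have form: "\<exists>z. z \<in> G - Y \<and> z \<noteq> u \<and> T = insert z Y" if T: "T \<in> Gm u" "v \<in> T" for T
  proof -
    obtain p q where pq: "p \<noteq> q" "p \<notin> U0" "q \<notin> U0" "T = insert p (insert q (U0 - {u}))"
      using edge_form[OF u T(1)] by blast
    obtain z where z: "z \<notin> U0" "z \<noteq> v" "T = insert z Y"
    proof (cases "v = p")
      case True then show ?thesis using that pq by (auto simp: Y_def insert_commute)
    next
      case False then have "v = q" using T(2) pq v by auto
      then show ?thesis using that pq by (auto simp: Y_def)
    qed
    have zY: "z \<notin> Y" using z by (auto simp: Y_def)
    have zG: "z \<in> G"
    proof (rule ccontr)
      assume "z \<notin> G"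
      then have "G \<inter> T \<subseteq> G \<inter> Y" using z by auto
      then show False using cov_contra[OF Gm_TT[OF T(1)] G(1)] G(2) finY by blast
    qed
    show ?thesis using z zY zG u by (auto simp: Y_def)
  qed
  have low: "t - 1 \<le> card (G \<inter> Y)"
  proof -
    obtain z where z: "z \<in> G - Y" "T0 = insert z Y" using form[OF T0] by blast
    have "G \<inter> T0 \<subseteq> insert z (G \<inter> Y)" using z by auto
    then have "card (G \<inter> T0) \<le> card (insert z (G \<inter> Y))" using finY by (intro card_mono) auto
    also have "\<dots> \<le> card (G \<inter> Y) + 1" using finY by (simp add: card_insert_if)
    finally show ?thesis using TT_cov[OF Gm_TT[OF T0(1)] G(1)] by linarith
  qed
  show ?thesis using G low form unfolding Y_def by blast
qed

lemma cardGY: "G \<in> F \<Longrightarrow> finite Y \<Longrightarrow> card (G - Y) = k - card (G \<inter> Y)"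
  using F_card by (simp add: card_Diff_subset_Int)

lemma deg_gen:
  assumes u: "u \<in> U0" and v: "v \<notin> U0"
  shows "card {T \<in> Gm u. v \<in> T} \<le> k - t + 1"
proof (cases "{T \<in> Gm u. v \<in> T} = {}")
  case True then have "card {T \<in> Gm u. v \<in> T} = 0" by (metis card.empty)
  then show ?thesis by simp
next
  case False
  define Y where "Y = insert v (U0 - {u})"
  obtain G where G: "G \<in> F" "card (G \<inter> Y) < t" "t - 1 \<le> card (G \<inter> Y)"
    "\<forall>T\<in>{T \<in> Gm u. v \<in> T}. \<exists>z. z \<in> G - Y \<and> z \<noteq> u \<and> T = insert z Y"
    using deg_core[OF u v False] unfolding Y_def by blast
  have finY: "finite Y" using finU0 by (simp add: Y_def)
  have "{T \<in> Gm u. v \<in> T} \<subseteq> (\<lambda>z. insert z Y) ` (G - Y)" using G(4) by blast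
  then have "card {T \<in> Gm u. v \<in> T} \<le> card (G - Y)"
    using F_card[OF G(1)] by (meson card_image_le card_mono finite_Diff finite_imageI order_trans)
  also have "\<dots> = k - card (G \<inter> Y)" using cardGY[OF G(1) finY] .
  finally show ?thesis using G(3) t1 by linarith
qed

lemma deg_ref:
  assumes u: "u \<in> U0" and v: "v \<notin> U0" and u': "u' \<in> U0" "u' \<noteq> u"
    and q: "q \<notin> U0" "q \<noteq> v" and T': "(U0 - {u'}) \<union> {v,q} \<in> TT"
    and nT: "(U0 - {u}) \<union> {v,q} \<notin> TT"
  shows "card {T \<in> Gm u. v \<in> T} \<le> k - t"
proof (cases "{T \<in> Gm u. v \<in> T} = {}")
  case True then have "card {T \<in> Gm u. v \<in> T} = 0" by (metis card.empty)
  then show ?thesis by simp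
next
  case False
  define Y where "Y = insert v (U0 - {u})"
  obtain G where G: "G \<in> F" "card (G \<inter> Y) < t" "t - 1 \<le> card (G \<inter> Y)"
    "\<forall>T\<in>{T \<in> Gm u. v \<in> T}. \<exists>z. z \<in> G - Y \<and> z \<noteq> u \<and> T = insert z Y"
    using deg_core[OF u v False] unfolding Y_def by blast
  have finY: "finite Y" using finU0 by (simp add: Y_def)
  have finG: "finite G" using F_card[OF G(1)] by simp
  have "{T \<in> Gm u. v \<in> T} \<subseteq> (\<lambda>z. insert z Y) ` (G - Y - {u,q})"
  proof
    fix T assume T: "T \<in> {T \<in> Gm u. v \<in> T}"
    obtain z where z: "z \<in> G - Y" "z \<noteq> u" "T = insert z Y" using G(4) T by blast
    have "z \<noteq> q"
    proof
      assume "z = q"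
      then have "T = (U0 - {u}) \<union> {v,q}" using z by (auto simp: Y_def)
      then show False using nT T Gm_TT by auto
    qed
    then show "T \<in> (\<lambda>z. insert z Y) ` (G - Y - {u,q})" using z by auto
  qed
  then have c1: "card {T \<in> Gm u. v \<in> T} \<le> card (G - Y - {u,q})"
    using finG by (meson card_image_le card_mono finite_Diff finite_imageI order_trans)
  have uY: "u \<notin> Y" using v u by (auto simp: Y_def)
  have qY: "q \<notin> Y" using q by (auto simp: Y_def)
  have "u \<in> G \<or> q \<in> G"
  proof (rule ccontr)
    assume nG: "\<not> (u \<in> G \<or> q \<in> G)"
    have "G \<inter> ((U0 - {u'}) \<union> {v,q}) \<subseteq> G \<inter> Y" using nG by (auto simp: Y_def)
    then show False using cov_contra[OF T' G(1)] G(2) finY by blast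
  qed
  then have "card (G - Y - {u,q}) < card (G - Y)"
    using uY qY finG by (intro psubset_card_mono) auto
  also have "card (G - Y) = k - card (G \<inter> Y)" using cardGY[OF G(1) finY] .
  finally show ?thesis using c1 G(3) t1 by linarith
qed


lemma st_E: "card (st EA v) \<le> k - t + 1" "card (st EB v) \<le> k - t + 1"
  "v \<notin> U0 \<Longrightarrow> card (st EA v) \<le> card {T \<in> Gm b. v \<in> T}"
  "v \<notin> U0 \<Longrightarrow> card (st EB v) \<le> card {T \<in> Gm a. v \<in> T}"
proof -
  have gen: "card (st ((\<lambda>T. T - U0) ` Gm u) v) \<le> card {T \<in> Gm u. v \<in> T}" for u
  proof -
    have "st ((\<lambda>T. T - U0) ` Gm u) v \<subseteq> (\<lambda>T. T - U0) ` {T \<in> Gm u. v \<in> T}"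
      by (auto simp: st_def)
    have f1: "finite {T \<in> Gm u. v \<in> T}" using finG(2)[of u] by simp
    have "card (st ((\<lambda>T. T - U0) ` Gm u) v) \<le> card ((\<lambda>T. T - U0) ` {T \<in> Gm u. v \<in> T})"
      using \<open>st _ v \<subseteq> _\<close> f1 by (intro card_mono) auto
    also have "\<dots> \<le> card {T \<in> Gm u. v \<in> T}" using f1 by (rule card_image_le)
    finally show ?thesis .
  qed
  have gen2: "card (st ((\<lambda>T. T - U0) ` Gm u) v) \<le> k - t + 1" if u: "u \<in> U0" for u
  proof (cases "v \<in> U0")
    case True
    then have "st ((\<lambda>T. T - U0) ` Gm u) v = {}" by (auto simp: st_def)
    then show ?thesis by simp
  next
    case False
    then show ?thesis using gen[of u] deg_gen[OF u False] by linarith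
  qed
  show "card (st EA v) \<le> k - t + 1" using gen2[OF bU] by (simp add: EA_def)
  show "card (st EB v) \<le> k - t + 1" using gen2[OF aU] by (simp add: EB_def)
  show "v \<notin> U0 \<Longrightarrow> card (st EA v) \<le> card {T \<in> Gm b. v \<in> T}" using gen by (simp add: EA_def)
  show "v \<notin> U0 \<Longrightarrow> card (st EB v) \<le> card {T \<in> Gm a. v \<in> T}" using gen by (simp add: EB_def)
qed

lemma T1_Gb: "T1 \<in> Gm b" and T1_alt: "T1 = (U0 - {b}) \<union> {x1,y1}"
proof -
  show "T1 = (U0 - {b}) \<union> {x1,y1}" using T1eq Ub by auto
  then show "T1 \<in> Gm b" using T1T x1U y1U by (auto simp: Gm_def)
qed

lemma EA_ne: "EA \<noteq> {}" using T1_Gb by (auto simp: EA_def)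

lemma in_EB: "e \<inter> U0 = {} \<Longrightarrow> (U0 - {a}) \<union> e \<in> TT \<Longrightarrow> e \<in> EB"
proof -
  assume e: "e \<inter> U0 = {}" and T: "(U0 - {a}) \<union> e \<in> TT"
  have "(U0 - {a}) \<union> e \<in> Gm a" using e T by (auto simp: Gm_def)
  moreover have "((U0 - {a}) \<union> e) - U0 = e" using e by auto
  ultimately show ?thesis unfolding EB_def by (metis image_eqI)
qed

lemma exA: "\<forall>f\<in>EB - EA. \<forall>p\<in>f. card (st EA p) < k - t + 1"
proof (intro ballI)
  fix f p assume f: "f \<in> EB - EA" and p: "p \<in> f"
  have fp: "card f = 2" "f \<inter> U0 = {}" "(U0 - {a}) \<union> f \<in> TT" using E_props(2) f by auto
  obtain q where q: "q \<noteq> p" "f = {p,q}" using edge_other[OF fp(1) p] by blast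
  have pU: "p \<notin> U0" "q \<notin> U0" using fp(2) q by auto
  have nT: "(U0 - {b}) \<union> {p,q} \<notin> TT" using in_EA fp(2) f q by blast
  have "card {T \<in> Gm b. p \<in> T} \<le> k - t"
    using deg_ref[OF bU pU(1) aU ab pU(2) q(1)] fp(3) q nT by simp
  then show "card (st EA p) < k - t + 1" using st_E(3)[OF pU(1)] by linarith
qed

lemma exB: "\<forall>f\<in>EA - EB. \<forall>p\<in>f. card (st EB p) < k - t + 1"
proof (intro ballI)
  fix f p assume f: "f \<in> EA - EB" and p: "p \<in> f"
  have fp: "card f = 2" "f \<inter> U0 = {}" "(U0 - {b}) \<union> f \<in> TT" using E_props(1) f by auto
  obtain q where q: "q \<noteq> p" "f = {p,q}" using edge_other[OF fp(1) p] by blast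
  have pU: "p \<notin> U0" "q \<notin> U0" using fp(2) q by auto
  have nT: "(U0 - {a}) \<union> {p,q} \<notin> TT" using in_EB fp(2) f q by blast
  have "card {T \<in> Gm a. p \<in> T} \<le> k - t"
    using deg_ref[OF aU pU(1) bU ab[symmetric] pU(2) q(1)] fp(3) q nT by simp
  then show "card (st EB p) < k - t + 1" using st_E(4)[OF pU(1)] by linarith
qed

lemma AB_bound: "card (Gm b) + card (Gm a) \<le> 2 * (k - t + 1)"
proof (cases "EB = {}")
  case False
  have "card EA + card EB \<le> 2 * (k - t + 1)"
  proof (rule graph_bound[OF fin_E EA_ne False])
    show "\<forall>e\<in>EA. card e = 2" "\<forall>e\<in>EB. card e = 2" using E_props by auto
    show "\<forall>e\<in>EA. \<forall>f\<in>EB. e \<inter> f \<noteq> {}" using cross_AB by blast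
    show "\<forall>v. card (st EA v) \<le> k - t + 1" "\<forall>v. card (st EB v) \<le> k - t + 1" using st_E by auto
    show "\<forall>f\<in>EB - EA. \<forall>p\<in>f. card (st EA p) < k - t + 1" by (rule exA)
    show "\<forall>f\<in>EA - EB. \<forall>p\<in>f. card (st EB p) < k - t + 1" by (rule exB)
    show "4 \<le> k - t + 1" using kt by simp
  qed
  then show ?thesis using card_EA card_EB by simp
next
  case True
  then have Ga: "Gm a = {}" by (simp add: EB_def)
  have Xn: "U0 - {b} \<subseteq> {1..n}" using U0n by auto
  obtain T where T: "T \<in> TT" "card ((U0 - {b}) \<inter> T) < t" using witT[OF Xn cardU1[OF bU]] by blast
  have "T \<in> G0 \<union> (\<Union>w\<in>U0 \<inter> F0. Gm w) \<union> Gm b \<union> Gm a" using TT_sub T(1) by blast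
  moreover have "T \<notin> G0"
  proof
    assume "T \<in> G0"
    then have "(U0 - {b}) \<inter> T = U0 - {b}" by (auto simp: G0_def)
    then show False using T(2) cardU1[OF bU] by simp
  qed
  moreover have "T \<notin> Gm b"
  proof
    assume "T \<in> Gm b"
    then have "(U0 - {b}) \<inter> T = U0 - {b}" by (auto simp: Gm_def)
    then show False using T(2) cardU1[OF bU] by simp
  qed
  ultimately obtain w where w: "w \<in> U0 \<inter> F0" "T \<in> Gm w" using Ga by blast
  obtain z0 where z0: "z0 \<in> F0" "z0 \<notin> U0" "z0 \<noteq> x1" "T = insert x1 (insert z0 (U0 - {w}))"
    using Gw_form[OF w] by blast
  have T': "(U0 - {w}) \<union> {x1,z0} \<in> TT" using z0(4) T(1) by (simp add: insert_commute)
  have wb: "b \<noteq> w" using w bF by auto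
  have "EA \<subseteq> st EA x1 \<union> st EA z0"
  proof
    fix e assume e: "e \<in> EA"
    have "e \<inter> {x1,z0} \<noteq> {}"
      using cross_gen[OF bU _ wb _ T'] E_props(1)[OF e] w x1U z0 by auto
    then show "e \<in> st EA x1 \<union> st EA z0" using e by (auto simp: st_def)
  qed
  then have "card EA \<le> card (st EA x1 \<union> st EA z0)" using fin_E by (intro card_mono) (auto simp: st_def)
  also have "\<dots> \<le> card (st EA x1) + card (st EA z0)" by (rule card_Un_le)
  finally have "card EA \<le> 2 * (k - t + 1)" using st_E(1)[of x1] st_E(1)[of z0] kt by simp
  then show ?thesis using card_EA Ga by simp
qed

lemma caseI:
  assumes "card ZW \<le> 1"
  shows "card TT \<le> 3 * (k - t) + t + 2"
proof -
  have "(\<Sum>w\<in>U0 \<inter> F0. card (Gm w)) \<le> (\<Sum>w\<in>U0 \<inter> F0. 1)"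
    using card_Gw_ZW assms by (intro sum_mono) (meson order_trans)
  also have "\<dots> = t - 1" using cardW by simp
  finally have "(\<Sum>w\<in>U0 \<inter> F0. card (Gm w)) \<le> t - 1" .
  then show ?thesis using card_TT card_G0 AB_bound t1 kt by simp
qed


lemma edge_v: "u \<in> U0 \<Longrightarrow> T \<in> Gm u \<Longrightarrow> v \<in> T \<Longrightarrow> v \<notin> U0 \<Longrightarrow>
  \<exists>z. z \<notin> U0 \<and> z \<noteq> v \<and> T = insert z (insert v (U0 - {u}))"
proof -
  assume u: "u \<in> U0" and T: "T \<in> Gm u" and v: "v \<in> T" "v \<notin> U0"
  obtain p q where pq: "p \<noteq> q" "p \<notin> U0" "q \<notin> U0" "T = insert p (insert q (U0 - {u}))"
    using edge_form[OF u T] by blast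
  show ?thesis
  proof (cases "v = p")
    case True then show ?thesis using pq by (intro exI[of _ q]) (auto simp: insert_commute)
  next
    case False then have "v = q" using pq v by auto
    then show ?thesis using pq by (intro exI[of _ p]) auto
  qed
qed

end

locale L3 = L2 +
  fixes z1 z2 w1 w2 :: nat
  assumes z12: "z1 \<noteq> z2" and z1F: "z1 \<in> F0" "z1 \<notin> U0" "z1 \<noteq> x1"
    and z2F: "z2 \<in> F0" "z2 \<notin> U0" "z2 \<noteq> x1"
    and w1: "w1 \<in> U0 \<inter> F0" and w2: "w2 \<in> U0 \<inter> F0"
    and S1: "(U0 - {w1}) \<union> {x1,z1} \<in> TT" and S2: "(U0 - {w2}) \<union> {x1,z2} \<in> TT"
begin

lemma t2: "t \<ge> 2" using t2_of_W[OF w1] .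
lemma w1b: "w1 \<noteq> b" "w1 \<noteq> a" using w1 bF aF by auto
lemma w2b: "w2 \<noteq> b" "w2 \<noteq> a" using w2 bF aF by auto

lemma GA_II: "T \<in> Gm b \<Longrightarrow> x1 \<in> T \<or> T = (U0 - {b}) \<union> {z1,z2}"
proof -
  assume T: "T \<in> Gm b"
  define e where "e = T - U0"
  have E: "card e = 2" "e \<inter> U0 = {}" "(U0 - {b}) \<union> e \<in> TT" using E_gen[OF bU] T by (auto simp: e_def)
  have c1: "e \<inter> {x1,z1} \<noteq> {}" using cross_gen[OF bU _ w1b(1)[symmetric] E(3) S1 E(2)] w1 x1U z1F by auto
  have c2: "e \<inter> {x1,z2} \<noteq> {}" using cross_gen[OF bU _ w2b(1)[symmetric] E(3) S2 E(2)] w2 x1U z2F by auto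
  show ?thesis
  proof (cases "x1 \<in> T")
    case False
    then have "x1 \<notin> e" by (simp add: e_def)
    then have "{z1,z2} \<subseteq> e" using c1 c2 by auto
    moreover have "card {z1,z2} = 2" using z12 by simp
    ultimately have "e = {z1,z2}" using E(1) by (metis card_subset_eq card.infinite zero_neq_numeral)
    then show ?thesis using Gm_recon[OF T] by (simp add: e_def)
  qed simp
qed

lemma GB_II: "T \<in> Gm a \<Longrightarrow> x1 \<in> T"
proof (rule ccontr)
  assume T: "T \<in> Gm a" and nx: "x1 \<notin> T"
  define e where "e = T - U0"
  have E: "card e = 2" "e \<inter> U0 = {}" "(U0 - {a}) \<union> e \<in> TT" using E_gen[OF aU] T by (auto simp: e_def)
  have c1: "e \<inter> {x1,z1} \<noteq> {}" using cross_gen[OF aU _ w1b(2)[symmetric] E(3) S1 E(2)] w1 x1U z1F by auto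
  have c2: "e \<inter> {x1,z2} \<noteq> {}" using cross_gen[OF aU _ w2b(2)[symmetric] E(3) S2 E(2)] w2 x1U z2F by auto
  have T1': "(U0 - {b}) \<union> {x1,y1} \<in> TT" using T1_alt T1T by simp
  have c3: "e \<inter> {x1,y1} \<noteq> {}" using cross_gen[OF aU bU ab E(3) T1' E(2)] x1U y1U by auto
  have "x1 \<notin> e" using nx by (simp add: e_def)
  then have "{z1,z2,y1} \<subseteq> e" using c1 c2 c3 by auto
  moreover have "card {z1,z2,y1} = 3"
  proof -
    have "z1 \<noteq> y1" "z2 \<noteq> y1" using z1F z2F y1F by auto
    then show ?thesis using z12 by simp
  qed
  ultimately have "3 \<le> card e" using E(1) by (metis card_mono card.infinite zero_neq_numeral)
  then show False using E(1) by simp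
qed

lemma sumW_le: "(\<And>w. w \<in> U0 \<inter> F0 \<Longrightarrow> card (Gm w) \<le> c) \<Longrightarrow> (\<Sum>w\<in>U0 \<inter> F0. card (Gm w)) \<le> (t - 1) * c"
proof -
  assume h: "\<And>w. w \<in> U0 \<inter> F0 \<Longrightarrow> card (Gm w) \<le> c"
  have "(\<Sum>w\<in>U0 \<inter> F0. card (Gm w)) \<le> (\<Sum>w\<in>U0 \<inter> F0. c)" using h by (intro sum_mono) auto
  also have "\<dots> = (t - 1) * c" using cardW by simp
  finally show ?thesis .
qed

lemma caseIIa:
  assumes N: "(U0 - {b}) \<union> {z1,z2} \<in> TT"
  shows "card TT \<le> 2 * (k - t) + 2 * t + 3"
proof -
  have "Gm a \<subseteq> (\<lambda>z. insert z (insert x1 (U0 - {a}))) ` {z1,z2}"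
  proof
    fix T assume T: "T \<in> Gm a"
    obtain z where z: "z \<notin> U0" "z \<noteq> x1" "T = insert z (insert x1 (U0 - {a}))"
      using edge_v[OF aU T GB_II[OF T] x1U] by blast
    have T': "(U0 - {a}) \<union> {x1,z} \<in> TT" using z(3) Gm_TT[OF T] by (simp add: insert_commute)
    have "{x1,z} \<inter> {z1,z2} \<noteq> {}" using cross_gen[OF aU bU ab T' N] x1U z z1F z2F by auto
    then have "z \<in> {z1,z2}" using z1F z2F by auto
    then show "T \<in> (\<lambda>z. insert z (insert x1 (U0 - {a}))) ` {z1,z2}" using z(3) by blast
  qed
  moreover have "card ((\<lambda>z. insert z (insert x1 (U0 - {a}))) ` {z1,z2}) \<le> 2"
    using card_image_le[of "{z1,z2}" "\<lambda>z. insert z (insert x1 (U0 - {a}))"] z12 by simp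
  ultimately have ca: "card (Gm a) \<le> 2" by (meson card_mono finite.emptyI finite.insertI finite_imageI order_trans)
  have cw: "card (Gm w) \<le> 2" if w: "w \<in> U0 \<inter> F0" for w
  proof -
    have wb: "w \<noteq> b" using w bF by auto
    have "Gm w \<subseteq> (\<lambda>z. insert x1 (insert z (U0 - {w}))) ` {z1,z2}"
    proof
      fix T assume T: "T \<in> Gm w"
      obtain z where z: "z \<in> F0" "z \<notin> U0" "z \<noteq> x1" "T = insert x1 (insert z (U0 - {w}))"
        using Gw_form[OF w T] by blast
      have T': "(U0 - {w}) \<union> {x1,z} \<in> TT" using z(4) Gm_TT[OF T] by (simp add: insert_commute)
      have "{x1,z} \<inter> {z1,z2} \<noteq> {}" using cross_gen[OF _ bU wb T' N] w x1U z z1F z2F by auto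
      then have "z \<in> {z1,z2}" using z1F z2F by auto
      then show "T \<in> (\<lambda>z. insert x1 (insert z (U0 - {w}))) ` {z1,z2}" using z(4) by blast
    qed
    moreover have "card ((\<lambda>z. insert x1 (insert z (U0 - {w}))) ` {z1,z2}) \<le> 2"
      using card_image_le[of "{z1,z2}" "\<lambda>z. insert x1 (insert z (U0 - {w}))"] z12 by simp
    ultimately show ?thesis by (meson card_mono finite.emptyI finite.insertI finite_imageI order_trans)
  qed
  have "Gm b \<subseteq> {T \<in> Gm b. x1 \<in> T} \<union> {(U0 - {b}) \<union> {z1,z2}}" using GA_II by blast
  then have "card (Gm b) \<le> card ({T \<in> Gm b. x1 \<in> T} \<union> {(U0 - {b}) \<union> {z1,z2}})"
    using finG by (intro card_mono) auto
  also have "\<dots> \<le> card {T \<in> Gm b. x1 \<in> T} + 1" using card_Un_le[of _ "{_}"] by simp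
  finally have cb: "card (Gm b) \<le> k - t + 2" using deg_gen[OF bU x1U] by linarith
  have sw: "(\<Sum>w\<in>U0 \<inter> F0. card (Gm w)) \<le> (t - 1) * 2" using sumW_le cw by blast
  show ?thesis using card_TT card_G0 ca cb sw t2 kt by simp
qed

end

context L2 begin

end

context L3 begin

lemma card_Int_ins: "finite S \<Longrightarrow> x \<notin> S \<Longrightarrow> card (G \<inter> insert x S) = (if x \<in> G then 1 else 0) + card (G \<inter> S)"
proof -
  assume fS: "finite S" and xS: "x \<notin> S"
  show ?thesis
  proof (cases "x \<in> G")
    case True
    then have "G \<inter> insert x S = insert x (G \<inter> S)" by blast
    moreover have "card (insert x (G \<inter> S)) = Suc (card (G \<inter> S))" using fS xS by (simp add: card_insert_if)
    ultimately show ?thesis using True by simp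
  next
    case False
    then have "G \<inter> insert x S = G \<inter> S" by blast
    then show ?thesis using False by simp
  qed
qed

lemma card_Diff_ins: "finite S \<Longrightarrow> x \<notin> S \<Longrightarrow> card (insert x S - G) = (if x \<in> G then 0 else 1) + card (S - G)"
proof -
  assume fS: "finite S" and xS: "x \<notin> S"
  show ?thesis
  proof (cases "x \<in> G")
    case True
    then have "insert x S - G = S - G" by blast
    then show ?thesis using True by simp
  next
    case False
    then have "insert x S - G = insert x (S - G)" by blast
    moreover have "card (insert x (S - G)) = Suc (card (S - G))" using fS xS by (simp add: card_insert_if)
    ultimately show ?thesis using False by simp
  qed
qed

lemma sum_ind: "finite A \<Longrightarrow> (\<Sum>w\<in>A. (if w \<in> G then 1 else 0::nat)) = card (A \<inter> G)"
proof -
  assume fA: "finite A"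
  have "(\<Sum>w\<in>A. (if w \<in> G then 1 else 0::nat)) = (\<Sum>w\<in>{w\<in>A. w \<in> G}. 1)"
    using sum.inter_filter[OF fA, of "\<lambda>_. 1::nat" "\<lambda>w. w \<in> G"] by simp
  moreover have "{w\<in>A. w \<in> G} = A \<inter> G" by blast
  ultimately show ?thesis by simp
qed

lemma sum_nind: "finite A \<Longrightarrow> (\<Sum>w\<in>A. (if w \<in> G then 0 else c::nat)) = c * card (A - G)"
proof -
  assume fA: "finite A"
  have "(\<Sum>w\<in>A. (if w \<in> G then 0 else c::nat)) = (\<Sum>w\<in>A. (if w \<notin> G then c else 0::nat))"
    by (intro sum.cong) auto
  also have "\<dots> = (\<Sum>w\<in>{w\<in>A. w \<notin> G}. c)"
    using sum.inter_filter[OF fA, of "\<lambda>_. c" "\<lambda>w. w \<notin> G"] by simp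
  finally have "(\<Sum>w\<in>A. (if w \<in> G then 0 else c::nat)) = (\<Sum>w\<in>{w\<in>A. w \<notin> G}. c)" .
  moreover have "{w\<in>A. w \<notin> G} = A - G" by blast
  ultimately show ?thesis by simp
qed

lemma caseIIb:
  assumes N: "(U0 - {b}) \<union> {z1,z2} \<notin> TT"
  shows "card TT \<le> 3 * (k - t) + 3 \<or> card TT + t \<le> (t + 2) * (k - t) + 3"
proof -
  define W where "W = U0 \<inter> F0"
  define Y where "Y = insert x1 (U0 - {b})"
  have Gbx: "x1 \<in> T" if "T \<in> Gm b" for T using GA_II[OF that] N Gm_TT[OF that] by auto
  have Gbe: "{T \<in> Gm b. x1 \<in> T} = Gm b" using Gbx by auto
  have Gae: "{T \<in> Gm a. x1 \<in> T} = Gm a" using GB_II by auto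
  have finW: "finite W" using finU0 by (simp add: W_def)
  have Yd: "Y = insert x1 (insert a W)" using Ub by (simp add: Y_def W_def)
  have x1aW: "x1 \<notin> insert a W" "a \<notin> W" using x1U aU aF by (auto simp: W_def)
  have finY: "finite Y" using finU0 by (simp add: Y_def)
  have Yn: "Y \<subseteq> {1..n}" using U0n TT_card[OF T1T] T1eq by (auto simp: Y_def)
  have cY: "card Y = t + 1" using cardU1[OF bU] x1U finU0 by (simp add: Y_def)
  obtain G where G: "G \<in> F" "card (G \<inter> Y) < t" using wit[OF Yn cY] by blast
  have finG: "finite G" using F_card[OF G(1)] by simp
  have T1Y: "T1 = insert y1 Y" using T1_alt by (auto simp: Y_def)
  have y1Y: "y1 \<notin> Y" using y1U x1F y1F by (auto simp: Y_def)
  have y1G: "y1 \<in> G"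
  proof (rule ccontr)
    assume "y1 \<notin> G"
    then have "G \<inter> T1 \<subseteq> G \<inter> Y" using T1Y by auto
    then show False using cov_contra[OF T1T G(1)] G(2) finY by blast
  qed
  have cGY: "card (G \<inter> Y) = t - 1"
  proof -
    have "G \<inter> T1 \<subseteq> insert y1 (G \<inter> Y)" using T1Y by auto
    then have "card (G \<inter> T1) \<le> card (insert y1 (G \<inter> Y))" using finY by (intro card_mono) auto
    also have "\<dots> \<le> card (G \<inter> Y) + 1" using finY by (simp add: card_insert_if)
    finally show ?thesis using TT_cov[OF T1T G(1)] G(2) by linarith
  qed
  have decGY: "card (G \<inter> Y) = (if x1 \<in> G then 1 else 0) + (if a \<in> G then 1 else 0) + card (G \<inter> W)"
  proof -
    have "card (G \<inter> Y) = (if x1 \<in> G then 1 else 0) + card (G \<inter> insert a W)"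
      unfolding Yd by (rule card_Int_ins) (use finW x1aW in auto)
    moreover have "card (G \<inter> insert a W) = (if a \<in> G then 1 else 0) + card (G \<inter> W)"
      by (rule card_Int_ins) (use finW x1aW in auto)
    ultimately show ?thesis by simp
  qed
  have decYG: "card (Y - G) = (if x1 \<in> G then 0 else 1) + (if a \<in> G then 0 else 1) + card (W - G)"
  proof -
    have "card (Y - G) = (if x1 \<in> G then 0 else 1) + card (insert a W - G)"
      unfolding Yd by (rule card_Diff_ins) (use finW x1aW in auto)
    moreover have "card (insert a W - G) = (if a \<in> G then 0 else 1) + card (W - G)"
      by (rule card_Diff_ins) (use finW x1aW in auto)
    ultimately show ?thesis by simp
  qed
  have cYG: "card (Y - G) = 2"
  proof -
    have "card (Y - G) = card Y - card (Y \<inter> G)" using finY by (simp add: card_Diff_subset_Int)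
    then show ?thesis using cY cGY t2 by (simp add: Int_commute)
  qed
  have cGb: "card (Gm b) \<le> k - t + 1" using deg_gen[OF bU x1U] Gbe by simp
  have UbY: "U0 - {b} \<subseteq> Y" by (auto simp: Y_def)
  show ?thesis
  proof (cases "b \<in> G")
    case False
    have contra: "False" if T: "T \<in> TT" and v: "v \<in> G \<inter> Y" and sub: "T \<subseteq> insert z (insert b (Y - {v}))" for T v z
    proof -
      have "G \<inter> T \<subseteq> insert z ((G \<inter> Y) - {v})" using sub False by auto
      moreover have "card (insert z ((G \<inter> Y) - {v})) < t"
      proof -
        have "card ((G \<inter> Y) - {v}) = t - 2" using v cGY finY by (simp add: card_Diff_singleton)
        then have "card (insert z ((G \<inter> Y) - {v})) \<le> t - 2 + 1" using finY by (simp add: card_insert_if)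
        then show ?thesis using t2 by linarith
      qed
      ultimately show False using cov_contra[OF T G(1)] finY by blast
    qed
    have c0: "card G0 \<le> (if x1 \<in> G then 0 else k - t + 1)"
    proof (cases "x1 \<in> G")
      case True
      have "G0 = {}"
      proof (rule ccontr)
        assume "G0 \<noteq> {}"
        then obtain T where T: "T \<in> G0" by blast
        obtain z where z: "T = insert z U0" using G0_form[OF T] by blast
        have "T \<subseteq> insert z (insert b (Y - {x1}))" using z x1U by (auto simp: Y_def)
        then show False using contra[of T x1 z] T True by (auto simp: G0_def Y_def)
      qed
      then show ?thesis by simp
    qed (use card_G0 in simp)
    have cw: "card (Gm w) \<le> (if w \<in> G then 0 else k - t)" if w: "w \<in> W" for w
    proof (cases "w \<in> G")
      case True
      have "Gm w = {}"
      proof (rule ccontr)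
        assume "Gm w \<noteq> {}"
        then obtain T where T: "T \<in> Gm w" by blast
        obtain z where z: "T = insert x1 (insert z (U0 - {w}))" using Gw_form[OF _ T] w by (auto simp: W_def)
        have wY: "w \<in> Y" using w bF by (auto simp: W_def Y_def)
        have "T \<subseteq> insert z (insert b (Y - {w}))" using z x1U w by (auto simp: Y_def W_def)
        then show False using contra[of T w z] Gm_TT[OF T] True wY by auto
      qed
      then show ?thesis by simp
    qed (use card_Gw w in \<open>simp add: W_def\<close>)
    have ca: "card (Gm a) \<le> (if a \<in> G then 0 else k - t + 1)"
    proof (cases "a \<in> G")
      case True
      have "Gm a = {}"
      proof (rule ccontr)
        assume "Gm a \<noteq> {}"
        then obtain T where T: "T \<in> Gm a" by blast
        obtain z where z: "T = insert z (insert x1 (U0 - {a}))" using edge_v[OF aU T GB_II[OF T] x1U] by blast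
        have aY: "a \<in> Y" using aU ab by (auto simp: Y_def)
        have "T \<subseteq> insert z (insert b (Y - {a}))" using z x1U aU by (auto simp: Y_def)
        then show False using contra[of T a z] Gm_TT[OF T] True aY by auto
      qed
      then show ?thesis by simp
    qed (use deg_gen[OF aU x1U] Gae in simp)
    have sw: "(\<Sum>w\<in>U0 \<inter> F0. card (Gm w)) \<le> (k - t) * card (W - G)"
    proof -
      have "(\<Sum>w\<in>U0 \<inter> F0. card (Gm w)) \<le> (\<Sum>w\<in>W. (if w \<in> G then 0 else k - t))"
        unfolding W_def using cw by (intro sum_mono) (auto simp: W_def)
      also have "\<dots> = (k - t) * card (W - G)" using sum_nind[OF finW] .
      finally show ?thesis .
    qed
    have tot: "card TT \<le> card G0 + (k - t) * card (W - G) + card (Gm b) + card (Gm a)"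
      using card_TT sw by linarith
    have "card TT \<le> 3 * (k - t) + 3"
    proof (cases "x1 \<in> G"; cases "a \<in> G")
      assume "x1 \<in> G" "a \<in> G"
      then have "card (W - G) = 2" using decYG cYG by simp
      then show ?thesis using tot c0 ca cGb \<open>x1 \<in> G\<close> \<open>a \<in> G\<close> by simp
    next
      assume "x1 \<in> G" "a \<notin> G"
      then have "card (W - G) = 1" using decYG cYG by simp
      then show ?thesis using tot c0 ca cGb \<open>x1 \<in> G\<close> \<open>a \<notin> G\<close> by simp
    next
      assume "x1 \<notin> G" "a \<in> G"
      then have "card (W - G) = 1" using decYG cYG by simp
      then show ?thesis using tot c0 ca cGb \<open>x1 \<notin> G\<close> \<open>a \<in> G\<close> by simp
    next
      assume "x1 \<notin> G" "a \<notin> G"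
      then have "card (W - G) = 0" using decYG cYG by simp
      then show ?thesis using tot c0 ca cGb \<open>x1 \<notin> G\<close> \<open>a \<notin> G\<close> by simp
    qed
    then show ?thesis by simp
  next
    case True
    define K where "K = insert b Y"
    have bY: "b \<notin> Y" using ab bU x1U by (auto simp: Y_def)
    have finK: "finite K" using finY by (simp add: K_def)
    have cGK: "card (G \<inter> K) = t" using cGY True bY finY t2 by (simp add: K_def Int_insert_right card_insert_if)
    have cGmK: "card (G - K) = k - t" using cardGY[OF G(1) finK] cGK by simp
    have y1GK: "y1 \<in> G - K" using y1G y1Y y1U bU by (auto simp: K_def)
    have cGKF: "card ((G - K) \<inter> F0) \<le> k - t - 1"
    proof -
      have "(G - K) \<inter> F0 \<subseteq> (G - K) - {y1}" using y1F by auto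
      then have "card ((G - K) \<inter> F0) \<le> card ((G - K) - {y1})" using finG by (intro card_mono) auto
      also have "\<dots> = k - t - 1" using y1GK cGmK finG by (simp add: card_Diff_singleton)
      finally show ?thesis .
    qed
    have contra: "False" if T: "T \<in> TT" and v: "v \<in> G \<inter> K" and sub: "T \<subseteq> insert z (K - {v})" and zG: "z \<notin> G" for T v z
    proof -
      have "G \<inter> T \<subseteq> (G \<inter> K) - {v}" using sub zG by auto
      moreover have "card ((G \<inter> K) - {v}) < t" using v cGK finK t2 by (simp add: card_Diff_singleton)
      ultimately show False using cov_contra[OF T G(1)] finK by blast
    qed
    have Kx: "K - {x1} = U0" using x1U bU by (auto simp: K_def Y_def)
    have cb: "card (Gm b) \<le> k - t"
    proof -
      have "Gm b \<subseteq> (\<lambda>z. insert z Y) ` (G - K)"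
      proof
        fix T assume T: "T \<in> Gm b"
        obtain z where z: "z \<notin> U0" "z \<noteq> x1" "T = insert z (insert x1 (U0 - {b}))"
          using edge_v[OF bU T Gbx[OF T] x1U] by blast
        have zK: "z \<notin> K" using z bU by (auto simp: K_def Y_def)
        have "z \<in> G"
        proof (rule ccontr)
          assume "z \<notin> G"
          moreover have "T \<subseteq> insert z (K - {b})" using z bY by (auto simp: K_def Y_def)
          ultimately show False using contra[of T b z] Gm_TT[OF T] True by (auto simp: K_def)
        qed
        then show "T \<in> (\<lambda>z. insert z Y) ` (G - K)" using z zK by (auto simp: Y_def)
      qed
      then have "card (Gm b) \<le> card ((\<lambda>z. insert z Y) ` (G - K))" using finG by (intro card_mono) auto
      also have "\<dots> \<le> card (G - K)" using finG by (intro card_image_le) auto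
      finally show ?thesis using cGmK by simp
    qed
    have c0: "card G0 + (if x1 \<in> G then 1 else 0) \<le> k - t + 1"
    proof (cases "x1 \<in> G")
      case x1G: True
      have "G0 \<subseteq> (\<lambda>z. insert z U0) ` (insert x1 ((G - K) \<inter> F0))"
      proof
        fix T assume T: "T \<in> G0"
        obtain z where z: "z \<in> F0" "z \<notin> U0" "T = insert z U0" using G0_form[OF T] by blast
        show "T \<in> (\<lambda>z. insert z U0) ` (insert x1 ((G - K) \<inter> F0))"
        proof (cases "z = x1")
          case False
          have zK: "z \<notin> K" using z False bU by (auto simp: K_def Y_def)
          have "z \<in> G"
          proof (rule ccontr)
            assume "z \<notin> G"
            moreover have "T \<subseteq> insert z (K - {x1})" using z Kx by auto
            ultimately show False using contra[of T x1 z] T x1G by (auto simp: G0_def K_def Y_def)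
          qed
          then show ?thesis using z zK by auto
        qed (use z in auto)
      qed
      then have "card G0 \<le> card ((\<lambda>z. insert z U0) ` (insert x1 ((G - K) \<inter> F0)))" using finG by (intro card_mono) auto
      also have "\<dots> \<le> card (insert x1 ((G - K) \<inter> F0))" using finG by (intro card_image_le) auto
      also have "\<dots> \<le> card ((G - K) \<inter> F0) + 1" using finG by (simp add: card_insert_if)
      finally show ?thesis using cGKF x1G kt by simp
    qed (use card_G0 in simp)
    have cw: "card (Gm w) + (if w \<in> G then 1 else 0) \<le> k - t" if w: "w \<in> W" for w
    proof (cases "w \<in> G")
      case wG: True
      have "Gm w \<subseteq> (\<lambda>z. insert x1 (insert z (U0 - {w}))) ` ((G - K) \<inter> F0)"
      proof
        fix T assume T: "T \<in> Gm w"
        obtain z where z: "z \<in> F0" "z \<notin> U0" "z \<noteq> x1" "T = insert x1 (insert z (U0 - {w}))"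
          using Gw_form[OF _ T] w by (auto simp: W_def)
        have zK: "z \<notin> K" using z bU by (auto simp: K_def Y_def)
        have wK: "w \<in> G \<inter> K" using wG w by (auto simp: W_def K_def Y_def)
        have "z \<in> G"
        proof (rule ccontr)
          assume "z \<notin> G"
          moreover have "T \<subseteq> insert z (K - {w})" using z w x1U by (auto simp: K_def Y_def W_def)
          ultimately show False using contra[of T w z] Gm_TT[OF T] wK by auto
        qed
        then show "T \<in> (\<lambda>z. insert x1 (insert z (U0 - {w}))) ` ((G - K) \<inter> F0)" using z zK by auto
      qed
      then have "card (Gm w) \<le> card ((\<lambda>z. insert x1 (insert z (U0 - {w}))) ` ((G - K) \<inter> F0))"
        using finG by (intro card_mono) auto
      also have "\<dots> \<le> card ((G - K) \<inter> F0)" using finG by (intro card_image_le) auto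
      finally show ?thesis using cGKF wG kt by simp
    qed (use card_Gw w in \<open>simp add: W_def\<close>)
    have ca: "card (Gm a) + (if a \<in> G then 1 else 0) \<le> k - t + 1"
    proof (cases "a \<in> G")
      case aG: True
      have "Gm a \<subseteq> (\<lambda>z. insert z (insert x1 (U0 - {a}))) ` (G - K)"
      proof
        fix T assume T: "T \<in> Gm a"
        obtain z where z: "z \<notin> U0" "z \<noteq> x1" "T = insert z (insert x1 (U0 - {a}))"
          using edge_v[OF aU T GB_II[OF T] x1U] by blast
        have zK: "z \<notin> K" using z bU by (auto simp: K_def Y_def)
        have aK: "a \<in> G \<inter> K" using aG aU by (auto simp: K_def Y_def)
        have "z \<in> G"
        proof (rule ccontr)
          assume "z \<notin> G"
          moreover have "T \<subseteq> insert z (K - {a})" using z x1U aU by (auto simp: K_def Y_def)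
          ultimately show False using contra[of T a z] Gm_TT[OF T] aK by auto
        qed
        then show "T \<in> (\<lambda>z. insert z (insert x1 (U0 - {a}))) ` (G - K)" using z zK by auto
      qed
      then have "card (Gm a) \<le> card ((\<lambda>z. insert z (insert x1 (U0 - {a}))) ` (G - K))"
        using finG by (intro card_mono) auto
      also have "\<dots> \<le> card (G - K)" using finG by (intro card_image_le) auto
      finally show ?thesis using cGmK aG by simp
    qed (use deg_gen[OF aU x1U] Gae in simp)
    have sw: "(\<Sum>w\<in>U0 \<inter> F0. card (Gm w)) + card (W \<inter> G) \<le> (t - 1) * (k - t)"
    proof -
      have "(\<Sum>w\<in>U0 \<inter> F0. card (Gm w)) + card (W \<inter> G) =
            (\<Sum>w\<in>W. card (Gm w) + (if w \<in> G then 1 else 0))"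
        using sum_ind[OF finW] by (simp add: sum.distrib W_def)
      also have "\<dots> \<le> (\<Sum>w\<in>W. k - t)" using cw by (intro sum_mono) auto
      also have "\<dots> = (t - 1) * (k - t)" using cardW by (simp add: W_def)
      finally show ?thesis .
    qed
    have eq: "(t + 2) * (k - t) = (t - 1) * (k - t) + 3 * (k - t)"
    proof -
      have "t + 2 = (t - 1) + 3" using t2 by simp
      then show ?thesis by (metis add_mult_distrib)
    qed
    have "card (G \<inter> W) = card (W \<inter> G)" by (simp add: Int_commute)
    then have "card TT + t \<le> (t + 2) * (k - t) + 3"
      using card_TT sw c0 cw ca cb decGY cGY eq t2 kt by linarith
    then show ?thesis by simp
  qed
qed

end

context L2 begin


lemma main_bound:
  "card TT < max ((k - t) * (k - t + 1) + 1) (max ((t + 2) * (k - t) + 1) ((t + 4) choose 2))"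
proof (cases "card ZW \<le> 1")
  case True
  then have "card TT \<le> 3 * (k - t) + t + 2" by (rule caseI)
  then show ?thesis using arith_final[of "k - t" t "card TT"] kt t1 by simp
next
  case False
  then have "2 \<le> card ZW" by simp
  then obtain z1 z2 where zz: "z1 \<in> ZW" "z2 \<in> ZW" "z1 \<noteq> z2" by (rule two_elems)
  obtain w1 where w1: "w1 \<in> U0 \<inter> F0" "insert x1 (insert z1 (U0 - {w1})) \<in> TT" using zz(1) by (auto simp: ZW_def)
  obtain w2 where w2: "w2 \<in> U0 \<inter> F0" "insert x1 (insert z2 (U0 - {w2})) \<in> TT" using zz(2) by (auto simp: ZW_def)
  interpret L3 n k t F TT U0 F0 T1 y1 a b x1 z1 z2 w1 w2
  proof
    show "z1 \<noteq> z2" by (rule zz(3))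
    show "z1 \<in> F0" "z1 \<notin> U0" "z1 \<noteq> x1" using zz(1) by (auto simp: ZW_def)
    show "z2 \<in> F0" "z2 \<notin> U0" "z2 \<noteq> x1" using zz(2) by (auto simp: ZW_def)
    show "w1 \<in> U0 \<inter> F0" "w2 \<in> U0 \<inter> F0" using w1 w2 by auto
    show "(U0 - {w1}) \<union> {x1,z1} \<in> TT" using w1(2) by (simp add: insert_commute)
    show "(U0 - {w2}) \<union> {x1,z2} \<in> TT" using w2(2) by (simp add: insert_commute)
  qed
  have "card TT \<le> 2 * (k - t) + 2 * t + 3 \<or> card TT \<le> 3 * (k - t) + 3 \<or> card TT + t \<le> (t + 2) * (k - t) + 3"
  proof (cases "(U0 - {b}) \<union> {z1,z2} \<in> TT")
    case True then show ?thesis using caseIIa by blast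
  next
    case False then show ?thesis using caseIIb by blast
  qed
  then show ?thesis using arith_final[of "k - t" t "card TT"] kt t1 t2 by auto
qed

end

context L begin

lemma L_bound: "card TT < max ((k - t) * (k - t + 1) + 1) (max ((t + 2) * (k - t) + 1) ((t + 4) choose 2))"
proof -
  obtain a b x1 where abx: "a \<in> U0" "b \<in> U0" "a \<noteq> b" "a \<notin> F0" "b \<notin> F0" "x1 \<in> F0" "x1 \<notin> U0"
    "U0 - F0 = {a,b}" "T1 = insert a (insert x1 (insert y1 (U0 \<inter> F0)))" using exists_abx by blast
  interpret L2 n k t F TT U0 F0 T1 y1 a b x1 using abx by unfold_locales
  show ?thesis by (rule main_bound)
qed

end



lemma tau_le: "is_tcover n t G S \<Longrightarrow> tau n t G \<le> card S"
  unfolding tau_def by (rule Least_le) blast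

lemma Tcov_iff: "S \<in> Tcov n t G \<longleftrightarrow> is_tcover n t G S \<and> card S = tau n t G"
  by (simp add: Tcov_def)

theorem lemma2p7:
  fixes n k t :: nat and F :: "nat set set" and U0 F0 :: "nat set"
  assumes "n > 2 * k"
    and "k \<ge> t + 3"
    and "maximal_t_intersecting n k t F"
    and "tau n t F = t + 2"
    and "tau n t (Tcov n t F) = t + 1"
    and "U0 \<in> Ucov n t F"
    and "F0 \<in> F"
    and "card (U0 \<inter> F0) + 1 = t"
    and "\<not> Tcov n t F \<subseteq> k_subsets (U0 \<union> F0) (t + 2)"
  shows "card (Tcov n t F) < max ((k - t) * (k - t + 1) + 1) (max ((t + 2) * (k - t) + 1) ((t + 4) choose 2))"
proof -
  note nk = assms(1) and kt = assms(2) and mx = assms(3) and tF = assms(4) and tT = assms(5)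
    and U0U = assms(6) and F0F = assms(7) and UF0 = assms(8) and nsub = assms(9)
  define TT where "TT = Tcov n t F"
  have Fsub: "F \<subseteq> k_subsets {1..n} k" and Fint: "t_intersecting t F"
    and Fmax: "\<And>G. G \<subseteq> k_subsets {1..n} k \<Longrightarrow> t_intersecting t G \<Longrightarrow> F \<subseteq> G \<Longrightarrow> G = F"
    using mx unfolding maximal_t_intersecting_def by blast+
  have F_card: "\<And>G. G \<in> F \<Longrightarrow> finite G \<and> card G = k \<and> G \<subseteq> {1..n}"
    using Fsub unfolding k_subsets_def by (auto intro: finite_subset)
  have TT_props: "\<And>T. T \<in> TT \<Longrightarrow> T \<subseteq> {1..n} \<and> card T = t + 2 \<and> (\<forall>G\<in>F. t \<le> card (T \<inter> G))"
    unfolding TT_def Tcov_iff is_tcover_def using tF by auto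
  have TT_card: "\<And>T. T \<in> TT \<Longrightarrow> finite T \<and> card T = t + 2 \<and> T \<subseteq> {1..n}"
    using TT_props by (auto intro: finite_subset)
  have TT_cov: "\<And>T G. T \<in> TT \<Longrightarrow> G \<in> F \<Longrightarrow> t \<le> card (G \<inter> T)"
    using TT_props by (metis Int_commute)
  have super: "G \<in> F" if T: "T \<in> TT" and TG: "T \<subseteq> G" and Gn: "G \<subseteq> {1..n}" and cG: "card G = k" for T G
  proof -
    have "insert G F = F"
    proof (rule Fmax)
      show "insert G F \<subseteq> k_subsets {1..n} k" using Fsub Gn cG by (auto simp: k_subsets_def)
      show "F \<subseteq> insert G F" by auto
      have fG: "finite G" using Gn finite_subset by blast
      have GH: "t \<le> card (G \<inter> H)" if H: "H \<in> F" for H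
      proof -
        have "t \<le> card (T \<inter> H)" using TT_props[OF T] H by auto
        also have "\<dots> \<le> card (G \<inter> H)" using TG fG by (intro card_mono) auto
        finally show ?thesis .
      qed
      have "t \<le> card (G \<inter> G)" using cG kt by simp
      then show "t_intersecting t (insert G F)"
        using Fint GH unfolding t_intersecting_def by (auto simp: Int_commute)
    qed
    then show ?thesis by blast
  qed
  have TT_int: "\<And>T T'. T \<in> TT \<Longrightarrow> T' \<in> TT \<Longrightarrow> t \<le> card (T \<inter> T')"
  proof -
    fix T T' assume T: "T \<in> TT" and T': "T' \<in> TT"
    define R where "R = {1..n} - (T \<union> T')"
    have fT: "finite T" "finite T'" using TT_card T T' by auto
    have "card (T \<union> T') \<le> 2 * t + 4" using card_Un_le[of T T'] TT_card T T' by simp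
    moreover have "card R = n - card (T \<union> T')"
      unfolding R_def using TT_card T T' by (subst card_Diff_subset) auto
    ultimately have "k - (t + 2) \<le> card R" using nk kt by linarith
    then obtain E where E: "E \<subseteq> R" "card E = k - (t + 2)" "finite E" by (rule obtain_subset_with_card_n)
    define G where "G = T \<union> E"
    have Gn: "G \<subseteq> {1..n}" using E(1) TT_card T by (auto simp: G_def R_def)
    have dj: "T \<inter> E = {}" using E(1) by (auto simp: R_def)
    have cG: "card G = k" unfolding G_def using card_Un_disjoint[OF fT(1) E(3) dj] E(2) TT_card[OF T] kt by simp
    have GF: "G \<in> F" using super[OF T _ Gn cG] by (simp add: G_def)
    have "t \<le> card (T' \<inter> G)" using TT_props[OF T'] GF by auto
    moreover have "T' \<inter> G = T \<inter> T'" using E(1) by (auto simp: G_def R_def)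
    ultimately show "t \<le> card (T \<inter> T')" by simp
  qed
  have wit: "\<And>Y. Y \<subseteq> {1..n} \<Longrightarrow> card Y = t + 1 \<Longrightarrow> \<exists>G\<in>F. card (G \<inter> Y) < t"
  proof (rule ccontr)
    fix Y assume Y: "Y \<subseteq> {1..n}" "card Y = t + 1" and n: "\<not> (\<exists>G\<in>F. card (G \<inter> Y) < t)"
    then have "is_tcover n t F Y" unfolding is_tcover_def by (auto simp: Int_commute not_less)
    then have "tau n t F \<le> card Y" by (rule tau_le)
    then show False using tF Y by simp
  qed
  have witT: "\<And>X. X \<subseteq> {1..n} \<Longrightarrow> card X = t \<Longrightarrow> \<exists>T\<in>TT. card (X \<inter> T) < t"
  proof (rule ccontr)
    fix X assume X: "X \<subseteq> {1..n}" "card X = t" and n: "\<not> (\<exists>T\<in>TT. card (X \<inter> T) < t)"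
    then have "is_tcover n t TT X" unfolding is_tcover_def by (auto simp: not_less)
    then have "tau n t TT \<le> card X" by (rule tau_le)
    then show False using tT X by (simp add: TT_def)
  qed
  have U0p: "is_tcover n t TT U0" "card U0 = t + 1"
    using U0U tT unfolding Ucov_def Tcov_iff TT_def by auto
  have U0n: "U0 \<subseteq> {1..n}" and U0cov: "\<And>T. T \<in> TT \<Longrightarrow> t \<le> card (U0 \<inter> T)"
    using U0p(1) unfolding is_tcover_def by auto
  obtain T1 where T1: "T1 \<in> TT" "T1 \<notin> k_subsets (U0 \<union> F0) (t + 2)" using nsub by (auto simp: TT_def)
  then obtain y1 where y1: "y1 \<in> T1" "y1 \<notin> U0" "y1 \<notin> F0"
    using TT_card[OF T1(1)] by (auto simp: k_subsets_def)
  have finTT: "finite TT"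
  proof -
    have "TT \<subseteq> Pow {1..n}" using TT_card by auto
    then show ?thesis by (rule finite_subset) simp
  qed
  interpret L n k t F TT U0 F0 T1 y1
  proof
    show "k \<ge> t + 3" by (rule kt)
  qed (use F_card TT_card TT_cov TT_int wit witT U0n U0p U0cov F0F UF0 T1 y1 finTT in auto)
  show ?thesis using L_bound by (simp add: TT_def)
qed


end
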